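(* Let $M\in\mathbb{R}^{p\times q}_+$ be a nonnegative matrix with $\operatorname{rank}_{\mathrm{psd}}(M)=2$ and $\operatorname{rank}(M)=3$. Then the quotient space $\mathcal{SF}(M)/GL(2)$ is connected. *)

theory Defs
  imports "HOL-Analysis.Analysis"
begin

definition psd_mat :: "nat \<Rightarrow> (nat \<Rightarrow> nat \<Rightarrow> real) \<Rightarrow> bool" where
  "psd_mat k A \<longleftrightarrow> (\<forall>i<k. \<forall>j<k. A i j = A j i) \<and>
     (\<forall>x::nat \<Rightarrow> real. 0 \<le> (\<Sum>i<k. \<Sum>j<k. x i * A i j * x j))"

definition has_psd_factorization :: "nat \<Rightarrow> real^'q^'p \<Rightarrow> bool" where
  "has_psd_factorization k M \<longleftrightarrow>
     (\<exists>(A :: 'p \<Rightarrow> nat \<Rightarrow> nat \<Rightarrow> real) (B :: 'q \<Rightarrow> nat \<Rightarrow> nat \<Rightarrow> real).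
        (\<forall>i. psd_mat k (A i)) \<and> (\<forall>j. psd_mat k (B j)) \<and>
        (\<forall>i j. M $ i $ j = (\<Sum>a<k. \<Sum>b<k. A i a b * B j b a)))"

definition psd_rank :: "real^'q^'p \<Rightarrow> nat" where
  "psd_rank M = (LEAST k. has_psd_factorization k M)"

definition psd2 :: "real^2^2 \<Rightarrow> bool" where
  "psd2 A \<longleftrightarrow> transpose A = A \<and> (\<forall>x. 0 \<le> x \<bullet> (A *v x))"

definition SF2 :: "real^'q^'p \<Rightarrow> (('p \<Rightarrow> real^2^2) \<times> ('q \<Rightarrow> real^2^2)) set" where
  "SF2 M = {(A, B). (\<forall>i. psd2 (A i)) \<and> (\<forall>j. psd2 (B j)) \<and>
                    (\<forall>i j. M $ i $ j = trace (A i ** B j))}"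

definition GL2_act :: "real^2^2 \<Rightarrow> ('p \<Rightarrow> real^2^2) \<times> ('q \<Rightarrow> real^2^2)
                        \<Rightarrow> ('p \<Rightarrow> real^2^2) \<times> ('q \<Rightarrow> real^2^2)" where
  "GL2_act g AB = ((\<lambda>i. g ** fst AB i ** transpose g),
                   (\<lambda>j. transpose (matrix_inv g) ** snd AB j ** matrix_inv g))"

definition GL2_orbit_rel :: "real^'q^'p \<Rightarrow>
    ((('p \<Rightarrow> real^2^2) \<times> ('q \<Rightarrow> real^2^2)) \<times> (('p \<Rightarrow> real^2^2) \<times> ('q \<Rightarrow> real^2^2))) set" where
  "GL2_orbit_rel M = {(x, y). x \<in> SF2 M \<and> y \<in> SF2 M \<and> (\<exists>g. invertible g \<and> y = GL2_act g x)}"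

definition quotient_topology :: "'a topology \<Rightarrow> ('a \<times> 'a) set \<Rightarrow> 'a set topology" where
  "quotient_topology X R = topology (\<lambda>U. U \<subseteq> topspace X // R \<and> openin X (\<Union>U))"

definition SF2_mod_GL2 :: "real^'q^'p \<Rightarrow> (('p \<Rightarrow> real^2^2) \<times> ('q \<Rightarrow> real^2^2)) set topology" where
  "SF2_mod_GL2 M = quotient_topology (top_of_set (SF2 M)) (GL2_orbit_rel M)"


lemma istopology_quotient:
  assumes "equiv (topspace X) R"
  shows "istopology (\<lambda>U. U \<subseteq> topspace X // R \<and> openin X (\<Union>U))"
  unfolding istopology_def
proof (intro conjI allI impI)
  fix S T :: "'a set set"
  assume S: "S \<subseteq> topspace X // R \<and> openin X (\<Union>S)"
     and T: "T \<subseteq> topspace X // R \<and> openin X (\<Union>T)"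
  have eq: "\<Union>(S \<inter> T) = \<Union>S \<inter> \<Union>T"
  proof
    show "\<Union>S \<inter> \<Union>T \<subseteq> \<Union>(S \<inter> T)"
    proof
      fix x assume "x \<in> \<Union>S \<inter> \<Union>T"
      then obtain a b where ab: "a \<in> S" "b \<in> T" "x \<in> a" "x \<in> b" by blast
      then have "a \<in> topspace X // R" "b \<in> topspace X // R" using S T by auto
      then have "a = b" using ab assms quotient_disj by fastforce
      then show "x \<in> \<Union>(S \<inter> T)" using ab by blast
    qed
  qed blast
  have "openin X (\<Union>S \<inter> \<Union>T)" using S T by (intro openin_Int) auto
  then show "openin X (\<Union>(S \<inter> T))" by (subst eq)
  show "S \<inter> T \<subseteq> topspace X // R" using S by blast
next
  fix K :: "'a set set set"
  assume "\<forall>S\<in>K. S \<subseteq> topspace X // R \<and> openin X (\<Union>S)"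
  then show "\<Union>K \<subseteq> topspace X // R" by blast
  have "\<Union>(\<Union>K) = (\<Union>S\<in>K. \<Union>S)" by blast
  moreover have "openin X (\<Union>S\<in>K. \<Union>S)" using \<open>\<forall>S\<in>K. _\<close> by (intro openin_Union) auto
  ultimately show "openin X (\<Union>(\<Union>K))" by simp
qed

lemma openin_quotient_topology:
  assumes "equiv (topspace X) R"
  shows "openin (quotient_topology X R) U \<longleftrightarrow> U \<subseteq> topspace X // R \<and> openin X (\<Union>U)"
  unfolding quotient_topology_def using istopology_quotient[OF assms]
  by (simp add: topology_inverse')

end

theory Submission
  imports Defs
begin


definition mat3 :: "real^3 \<Rightarrow> real^2^2" where
  "mat3 v = (\<chi> i j. if i = 1 \<and> j = 1 then v$1 + v$2 else if i = 2 \<and> j = 2 then v$1 - v$2 else v$3)"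

definition lor :: "real^2^2 \<Rightarrow> real^3" where
  "lor X = vector [(X$1$1 + X$2$2)/2, (X$1$1 - X$2$2)/2, X$1$2]"

definition inL :: "real^3 \<Rightarrow> bool" where
  "inL v \<longleftrightarrow> 0 \<le> v$1 \<and> (v$2)\<^sup>2 + (v$3)\<^sup>2 \<le> (v$1)\<^sup>2"

lemma mat3_entries[simp]:
  "mat3 v $ 1 $ 1 = v$1 + v$2" "mat3 v $ 2 $ 2 = v$1 - v$2"
  "mat3 v $ 1 $ 2 = v$3" "mat3 v $ 2 $ 1 = v$3"
  by (simp_all add: mat3_def)

lemma lor_entries[simp]:
  "lor X $ 1 = (X$1$1 + X$2$2)/2" "lor X $ 2 = (X$1$1 - X$2$2)/2" "lor X $ 3 = X$1$2"
  by (simp_all add: lor_def)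

lemma mat2_eq_iff: "(A::real^2^2) = B \<longleftrightarrow> A$1$1 = B$1$1 \<and> A$1$2 = B$1$2 \<and> A$2$1 = B$2$1 \<and> A$2$2 = B$2$2"
  by (auto simp: vec_eq_iff forall_2)

lemma vec3_eq_iff: "(u::real^3) = v \<longleftrightarrow> u$1 = v$1 \<and> u$2 = v$2 \<and> u$3 = v$3"
  by (auto simp: vec_eq_iff forall_3)

lemma inner3: "(u::real^3) \<bullet> v = u$1* v$1 + u$2* v$2 + u$3* v$3"
  by (simp add: inner_vec_def sum_3)

lemma inner2: "(u::real^2) \<bullet> v = u$1* v$1 + u$2* v$2"
  by (simp add: inner_vec_def sum_2)

lemma transpose_nth[simp]: "transpose A $ i $ j = A $ j $ i"
  by (simp add: transpose_def)

lemma transpose_mat3[simp]: "transpose (mat3 v) = mat3 v"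
  unfolding mat2_eq_iff by simp

lemma sym_mat3_lor:
  assumes "transpose X = X" shows "mat3 (lor X) = (X::real^2^2)"
proof -
  have "transpose X $ 2 $ 1 = X $ 2 $ 1" using assms by simp
  then have "X$1$2 = X$2$1" by simp
  then show ?thesis unfolding mat2_eq_iff by (simp add: field_simps)
qed

lemma lor_mat3[simp]: "lor (mat3 v) = v"
  unfolding vec3_eq_iff by simp

lemma trace_mat3: "trace (mat3 u ** mat3 v) = 2 * (u \<bullet> v)"
  by (simp add: trace_def matrix_matrix_mult_def sum_2 inner3 algebra_simps)

lemma quad_mat3: "x \<bullet> (mat3 v *v x) = (v$1+v$2)*(x$1)\<^sup>2 + 2* v$3*x$1*x$2 + (v$1-v$2)*(x$2)\<^sup>2"
  by (simp add: inner2 matrix_vector_mult_def sum_2 power2_eq_square algebra_simps)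

lemma quad_nonneg:
  fixes p r c x y :: real
  assumes "0 \<le> p" "0 \<le> r" "c\<^sup>2 \<le> p*r"
  shows "0 \<le> p*x\<^sup>2 + 2*c*x*y + r*y\<^sup>2"
proof (cases "p = 0")
  case True
  then have "c\<^sup>2 \<le> 0" using assms by simp
  then have "c = 0" by simp
  then show ?thesis using True assms by simp
next
  case False
  then have pp: "p > 0" using assms by simp
  have "p * (p*x\<^sup>2 + 2*c*x*y + r*y\<^sup>2) = (p*x + c*y)\<^sup>2 + (p*r - c\<^sup>2)*y\<^sup>2"
    by (simp add: power2_eq_square algebra_simps)
  also have "\<dots> \<ge> 0" using assms by simp
  finally show ?thesis using pp by (simp add: zero_le_mult_iff)
qed

lemma psd2_mat3: "psd2 (mat3 v) \<longleftrightarrow> inL v"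
proof
  assume "inL v"
  then have h: "0 \<le> v$1" "(v$2)\<^sup>2 + (v$3)\<^sup>2 \<le> (v$1)\<^sup>2" by (auto simp: inL_def)
  have "(\<bar>v$2\<bar>)\<^sup>2 \<le> (v$1)\<^sup>2" using h(2) zero_le_power2[of "v$3"] unfolding power2_abs by linarith
  then have a: "\<bar>v$2\<bar> \<le> v$1" using h(1) by (rule power2_le_imp_le)
  show "psd2 (mat3 v)"
    unfolding psd2_def
  proof (intro conjI allI)
    fix x :: "real^2"
    have "0 \<le> (v$1+v$2)*(x$1)\<^sup>2 + 2* v$3*x$1*x$2 + (v$1-v$2)*(x$2)\<^sup>2"
      using quad_nonneg[of "v$1+v$2" "v$1-v$2" "v$3" "x$1" "x$2"] a h
      by (simp add: power2_eq_square algebra_simps)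
    then show "0 \<le> x \<bullet> (mat3 v *v x)" by (simp add: quad_mat3)
  qed simp
next
  assume p: "psd2 (mat3 v)"
  have q: "\<And>x::real^2. 0 \<le> (v$1+v$2)*(x$1)\<^sup>2 + 2* v$3*x$1*x$2 + (v$1-v$2)*(x$2)\<^sup>2"
    using p by (simp add: psd2_def quad_mat3)
  have q2: "\<And>a b. 0 \<le> (v$1+v$2)*a\<^sup>2 + 2* v$3*a*b + (v$1-v$2)*b\<^sup>2"
    using q[of "vector [a, b]" for a b] by simp
  have p0: "0 \<le> v$1+v$2" using q2[of 1 0] by simp
  have r0: "0 \<le> v$1-v$2" using q2[of 0 1] by simp
  have "(v$3)\<^sup>2 \<le> (v$1+v$2)*(v$1-v$2)"
  proof (cases "v$1+v$2 = 0")
    case True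
    have "v$3 = 0"
    proof (rule ccontr)
      assume c: "v$3 \<noteq> 0"
      have "0 \<le> 2* v$3*(-(v$1-v$2+1)/(2* v$3)) + (v$1-v$2)"
        using q2[of "-(v$1-v$2+1)/(2* v$3)" 1] True by simp
      also have "\<dots> = -1" using c by (simp add: field_simps)
      finally show False by simp
    qed
    then show ?thesis using True by simp
  next
    case False
    then have pp: "v$1+v$2 > 0" using p0 by simp
    have "0 \<le> (v$1+v$2)*(v$3)\<^sup>2 + 2* v$3* v$3*(-(v$1+v$2)) + (v$1-v$2)*(v$1+v$2)\<^sup>2"
      using q2[of "v$3" "-(v$1+v$2)"] by (simp add: power2_eq_square algebra_simps)
    also have "\<dots> = (v$1+v$2) * ((v$1+v$2)*(v$1-v$2) - (v$3)\<^sup>2)"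
      by (simp add: power2_eq_square algebra_simps)
    finally show ?thesis using pp by (simp add: zero_le_mult_iff)
  qed
  then show "inL v" using p0 r0 by (simp add: inL_def power2_eq_square algebra_simps)
qed

lemma inL_rev_cs:
  assumes "inL u" "inL v"
  shows "u$2* v$2 + u$3* v$3 \<le> u$1* v$1"
proof -
  have "(u$2* v$2 + u$3* v$3)\<^sup>2 \<le> ((u$2)\<^sup>2 + (u$3)\<^sup>2)*((v$2)\<^sup>2 + (v$3)\<^sup>2)"
  proof -
    have "0 \<le> (u$2 * v$3 - u$3 * v$2)\<^sup>2" by simp
    then show ?thesis by (simp add: power2_eq_square algebra_simps)
  qed
  also have "\<dots> \<le> (u$1)\<^sup>2 * (v$1)\<^sup>2"
    using assms by (intro mult_mono) (auto simp: inL_def)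
  also have "\<dots> = (u$1* v$1)\<^sup>2" by (simp add: power_mult_distrib)
  finally have "(u$2* v$2 + u$3* v$3)\<^sup>2 \<le> (u$1* v$1)\<^sup>2" .
  moreover have "0 \<le> u$1* v$1" using assms by (simp add: inL_def)
  ultimately show ?thesis by (rule power2_le_imp_le)
qed

lemma inL_inner_nonneg: "inL u \<Longrightarrow> inL v \<Longrightarrow> 0 \<le> u \<bullet> v"
proof -
  assume a: "inL u" "inL v"
  have "- (u$2* v$2 + u$3* v$3) \<le> u$1* v$1"
    using inL_rev_cs[of u "vector [v$1, -(v$2), -(v$3)]"] a by (simp add: inL_def)
  then show ?thesis by (simp add: inner3)
qed

lemma inL_dual:
  assumes "\<And>u. inL u \<Longrightarrow> 0 \<le> u \<bullet> y"
  shows "inL y"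
proof (rule ccontr)
  assume n: "\<not> inL y"
  define r where "r = sqrt ((y$2)\<^sup>2 + (y$3)\<^sup>2)"
  have r0: "0 \<le> r" by (simp add: r_def)
  have rr: "r\<^sup>2 = (y$2)\<^sup>2 + (y$3)\<^sup>2" by (simp add: r_def)
  have lt: "y$1 < r"
  proof (rule ccontr)
    assume "\<not> y$1 < r"
    then have "r \<le> y$1" by simp
    then have "r\<^sup>2 \<le> (y$1)\<^sup>2" using r0 by (simp add: power_mono)
    then show False using n \<open>r \<le> y$1\<close> r0 rr by (simp add: inL_def)
  qed
  show False
  proof (cases "r = 0")
    case True
    have "0 \<le> vector [1,0,0] \<bullet> y" by (rule assms) (simp add: inL_def)
    then show False using lt True by (simp add: inner3)
  next
    case False
    have "inL (vector [r, -(y$2), -(y$3)])" using rr r0 by (simp add: inL_def)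
    then have "0 \<le> vector [r, -(y$2), -(y$3)] \<bullet> y" by (rule assms)
    then have "0 \<le> r * y$1 - r\<^sup>2" using rr by (simp add: inner3 power2_eq_square)
    moreover have "r * y$1 < r * r" using lt False r0 by simp
    ultimately show False by (simp add: power2_eq_square)
  qed
qed



lemma inv_props:
  assumes "invertible (g::real^'n^'n)"
  shows "g ** matrix_inv g = mat 1" "matrix_inv g ** g = mat 1"
  using someI_ex[OF assms[unfolded invertible_def]] unfolding matrix_inv_def by auto

lemma matrix_inv_unique:
  assumes "(g::real^'n^'n) ** h = mat 1" shows "matrix_inv g = h"
proof -
  have "invertible g" using assms matrix_left_right_inverse invertible_def by blast
  then have "matrix_inv g = matrix_inv g ** (g ** h)" using assms by simp
  also have "\<dots> = h" using inv_props(2)[OF \<open>invertible g\<close>] by (simp add: matrix_mul_assoc)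
  finally show ?thesis .
qed

lemma invertible_I: "invertible (mat 1 :: real^'n^'n)"
  unfolding invertible_def by (rule exI[of _ "mat 1"]) simp

lemma matrix_inv_I: "matrix_inv (mat 1 :: real^'n^'n) = mat 1"
  by (rule matrix_inv_unique) simp

lemma invertible_inv: assumes "invertible (g::real^'n^'n)" shows "invertible (matrix_inv g)"
  unfolding invertible_def using inv_props[OF assms] by blast

lemma matrix_inv_inv: "invertible (g::real^'n^'n) \<Longrightarrow> matrix_inv (matrix_inv g) = g"
  by (rule matrix_inv_unique) (simp add: inv_props)

lemma invertible_mul: "invertible (g::real^'n^'n) \<Longrightarrow> invertible (h::real^'n^'n) \<Longrightarrow> invertible (g ** h)"
  unfolding invertible_def
  by (metis inv_props invertible_def matrix_mul_assoc matrix_mul_lid)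

lemma matrix_inv_mul: assumes "invertible (g::real^'n^'n)" "invertible (h::real^'n^'n)"
  shows "matrix_inv (g ** h) = matrix_inv h ** matrix_inv g"
proof (rule matrix_inv_unique)
  have "(g ** h) ** (matrix_inv h ** matrix_inv g) = g ** (h ** matrix_inv h) ** matrix_inv g"
    by (simp add: matrix_mul_assoc)
  also have "\<dots> = mat 1" using inv_props[OF assms(1)] inv_props[OF assms(2)] by simp
  finally show "(g ** h) ** (matrix_inv h ** matrix_inv g) = mat 1" .
qed

lemma psd2_congr:
  assumes "psd2 X" shows "psd2 (C ** X ** transpose C)"
  unfolding psd2_def
proof (intro conjI allI)
  have "transpose X = X" using assms by (simp add: psd2_def)
  then show "transpose (C ** X ** transpose C) = C ** X ** transpose C"
    by (simp add: matrix_transpose_mul matrix_mul_assoc)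
next
  fix x :: "real^2"
  have "x \<bullet> ((C ** X ** transpose C) *v x) = x \<bullet> (C *v (X *v (transpose C *v x)))"
    by (metis matrix_vector_mul_assoc)
  also have "\<dots> = (x v* C) \<bullet> (X *v (transpose C *v x))"
    by (simp add: dot_lmul_matrix)
  also have "\<dots> = (transpose C *v x) \<bullet> (X *v (transpose C *v x))"
    by simp
  also have "\<dots> \<ge> 0" using assms by (simp add: psd2_def)
  finally show "0 \<le> x \<bullet> ((C ** X ** transpose C) *v x)" .
qed

lemma trace_act:
  assumes "invertible (g::real^2^2)"
  shows "trace ((g ** A ** transpose g) ** (transpose (matrix_inv g) ** B ** matrix_inv g)) = trace (A ** B)"
proof -
  have e: "transpose g ** transpose (matrix_inv g) = mat 1"
    using inv_props(2)[OF assms] by (metis matrix_transpose_mul transpose_mat)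
  have "(g ** A ** transpose g) ** (transpose (matrix_inv g) ** B ** matrix_inv g)
        = g ** A ** (transpose g ** transpose (matrix_inv g)) ** B ** matrix_inv g"
    by (simp only: matrix_mul_assoc)
  also have "\<dots> = g ** (A ** B ** matrix_inv g)" unfolding e
    by (simp only: matrix_mul_assoc matrix_mul_rid)
  finally have 1: "(g ** A ** transpose g) ** (transpose (matrix_inv g) ** B ** matrix_inv g) = g ** (A ** B ** matrix_inv g)" .
  have "trace (g ** (A ** B ** matrix_inv g)) = trace ((A ** B ** matrix_inv g) ** g)"
    by (rule trace_mul_sym)
  also have "(A ** B ** matrix_inv g) ** g = A ** B ** (matrix_inv g ** g)"
    by (simp only: matrix_mul_assoc)
  also have "\<dots> = A ** B" using inv_props(2)[OF assms] by (simp only: matrix_mul_rid)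
  finally show ?thesis unfolding 1 .
qed

lemma act_SF:
  assumes "x \<in> SF2 M" "invertible g"
  shows "GL2_act g x \<in> SF2 M"
proof -
  obtain A B where x: "x = (A, B)" by fastforce
  have "psd2 (transpose (matrix_inv g) ** B j ** matrix_inv g)" for j
    using psd2_congr[of "B j" "transpose (matrix_inv g)"] assms x by (simp add: SF2_def)
  moreover have "psd2 (g ** A i ** transpose g)" for i
    using psd2_congr[of "A i" g] assms x by (simp add: SF2_def)
  ultimately show ?thesis using assms x trace_act[OF assms(2)]
    by (simp add: SF2_def GL2_act_def)
qed

lemma act_I: "GL2_act (mat 1) x = x"
  by (simp add: GL2_act_def matrix_inv_I)

lemma act_comp:
  assumes "invertible h" "invertible g"
  shows "GL2_act h (GL2_act g x) = GL2_act (h ** g) x"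
  using assms by (simp add: GL2_act_def matrix_inv_mul matrix_transpose_mul matrix_mul_assoc)

lemma equiv_orbit: "equiv (SF2 M) (GL2_orbit_rel M)"
proof (rule equivI)
  show "GL2_orbit_rel M \<subseteq> SF2 M \<times> SF2 M" by (auto simp: GL2_orbit_rel_def)
  show "refl_on (SF2 M) (GL2_orbit_rel M)"
  proof (rule refl_onI)
    fix x assume "x \<in> SF2 M"
    then show "(x, x) \<in> GL2_orbit_rel M"
      unfolding GL2_orbit_rel_def using act_I invertible_I by (metis (mono_tags, lifting) case_prodI mem_Collect_eq)
  qed
  show "sym (GL2_orbit_rel M)"
    unfolding sym_def
  proof (intro allI impI)
    fix x y assume "(x, y) \<in> GL2_orbit_rel M"
    then obtain g where x: "x \<in> SF2 M" and y: "y \<in> SF2 M" and g: "invertible g" and yg: "y = GL2_act g x"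
      by (auto simp: GL2_orbit_rel_def)
    have "GL2_act (matrix_inv g) y = GL2_act (matrix_inv g ** g) x"
      unfolding yg by (rule act_comp[OF invertible_inv[OF g] g])
    also have "\<dots> = x" using inv_props(2)[OF g] act_I by simp
    finally show "(y, x) \<in> GL2_orbit_rel M"
      using x y invertible_inv[OF g] by (auto simp: GL2_orbit_rel_def)
  qed
  show "trans (GL2_orbit_rel M)"
    unfolding trans_def
  proof (intro allI impI)
    fix x y z assume "(x, y) \<in> GL2_orbit_rel M" "(y, z) \<in> GL2_orbit_rel M"
    then obtain g h where x: "x \<in> SF2 M" and z: "z \<in> SF2 M" and g: "invertible g" and yg: "y = GL2_act g x"
       and h: "invertible h" and zh: "z = GL2_act h y"
      by (auto simp: GL2_orbit_rel_def)
    have "z = GL2_act (h ** g) x" unfolding zh yg by (rule act_comp[OF h g])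
    then show "(x, z) \<in> GL2_orbit_rel M"
      using x z invertible_mul[OF h g] by (auto simp: GL2_orbit_rel_def)
  qed
qed



lemma quotient_connected:
  fixes S :: "'a::topological_space set"
  assumes eq: "equiv S R"
    and ch: "\<And>x y. x \<in> S \<Longrightarrow> y \<in> S \<Longrightarrow>
       \<exists>T. connected T \<and> T \<subseteq> S \<and> (\<exists>x'\<in>T. (x, x') \<in> R) \<and> (\<exists>y'\<in>T. (y, y') \<in> R)"
  shows "connected_space (quotient_topology (top_of_set S) R)"
proof -
  let ?X = "quotient_topology (top_of_set S) R"
  have eq': "equiv (topspace (top_of_set S)) R" using eq by simp
  note oq = openin_quotient_topology[OF eq']
  have top: "S // R \<subseteq> topspace ?X"
  proof -
    have "openin ?X (S // R)" unfolding oq using eq by (simp add: Union_quotient)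
    then show ?thesis by (rule openin_subset)
  qed
  show ?thesis
    unfolding connected_space_def
  proof
    assume "\<exists>E1 E2. openin ?X E1 \<and> openin ?X E2 \<and> topspace ?X \<subseteq> E1 \<union> E2 \<and>
                    E1 \<inter> E2 = {} \<and> E1 \<noteq> {} \<and> E2 \<noteq> {}"
    then obtain E1 E2 where o1: "openin ?X E1" and o2: "openin ?X E2" and cov: "topspace ?X \<subseteq> E1 \<union> E2"
      and dj: "E1 \<inter> E2 = {}" and ne1: "E1 \<noteq> {}" and ne2: "E2 \<noteq> {}" by blast
    have E1q: "E1 \<subseteq> S // R" and O1: "openin (top_of_set S) (\<Union>E1)" using o1 oq by auto
    have E2q: "E2 \<subseteq> S // R" and O2: "openin (top_of_set S) (\<Union>E2)" using o2 oq by auto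
    obtain U1 where U1: "open U1" "\<Union>E1 = S \<inter> U1" using O1 by (auto simp: openin_open)
    obtain U2 where U2: "open U2" "\<Union>E2 = S \<inter> U2" using O2 by (auto simp: openin_open)
    obtain c1 where c1: "c1 \<in> E1" using ne1 by blast
    obtain c2 where c2: "c2 \<in> E2" using ne2 by blast
    obtain x where x: "x \<in> S" "c1 = R `` {x}" using c1 E1q by (auto elim: quotientE)
    obtain y where y: "y \<in> S" "c2 = R `` {y}" using c2 E2q by (auto elim: quotientE)
    obtain T where T: "connected T" "T \<subseteq> S" and x': "\<exists>x'\<in>T. (x, x') \<in> R" and y': "\<exists>y'\<in>T. (y, y') \<in> R"
      using ch[OF x(1) y(1)] by blast
    have sub: "T \<subseteq> U1 \<union> U2"
    proof
      fix z assume z: "z \<in> T"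
      then have zS: "z \<in> S" using T by blast
      have "R `` {z} \<in> S // R" using zS by (rule quotientI)
      then have "R `` {z} \<in> E1 \<union> E2" using top cov by blast
      moreover have "z \<in> R `` {z}" using eq zS by (auto simp: equiv_def refl_on_def)
      ultimately have "z \<in> \<Union>E1 \<union> \<Union>E2" by blast
      then show "z \<in> U1 \<union> U2" using U1 U2 by blast
    qed
    have disj: "U1 \<inter> U2 \<inter> T = {}"
    proof (rule ccontr)
      assume "U1 \<inter> U2 \<inter> T \<noteq> {}"
      then obtain z where z: "z \<in> U1" "z \<in> U2" "z \<in> T" by blast
      then have "z \<in> \<Union>E1" "z \<in> \<Union>E2" using U1 U2 T by blast+
      then obtain d1 d2 where d: "d1 \<in> E1" "d2 \<in> E2" "z \<in> d1" "z \<in> d2" by blast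
      then have "d1 = d2" using E1q E2q quotient_disj[OF eq] by blast
      then show False using d dj by blast
    qed
    have "U1 \<inter> T \<noteq> {}"
    proof -
      obtain x' where "x' \<in> T" "(x, x') \<in> R" using x' by blast
      then have "x' \<in> c1" using x by blast
      then show ?thesis using c1 U1 \<open>x' \<in> T\<close> by blast
    qed
    moreover have "U2 \<inter> T \<noteq> {}"
    proof -
      obtain y' where "y' \<in> T" "(y, y') \<in> R" using y' by blast
      then have "y' \<in> c2" using y by blast
      then show ?thesis using c2 U2 \<open>y' \<in> T\<close> by blast
    qed
    ultimately show False using connectedD[OF T(1) U1(1) U2(1) disj sub] by blast
  qed
qed



definition Gq :: "real^3 \<Rightarrow> real^3 \<Rightarrow> real^3 \<Rightarrow> real^3 \<Rightarrow> real^3 \<Rightarrow> real" where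
  "Gq a b c u v = (a \<bullet> u) * (a \<bullet> v) - (b \<bullet> u) * (b \<bullet> v) - (c \<bullet> u) * (c \<bullet> v)"

definition Gv :: "real^3 \<Rightarrow> real^3 \<Rightarrow> real^3 \<Rightarrow> real^3 \<Rightarrow> real^3" where
  "Gv a b c u = (a \<bullet> u) *\<^sub>R a - (b \<bullet> u) *\<^sub>R b - (c \<bullet> u) *\<^sub>R c"

lemma Gv_inner: "Gv a b c u \<bullet> v = Gq a b c u v"
  by (simp add: Gv_def Gq_def inner_diff_left algebra_simps)

locale core =
  fixes a0 b0 c0 a1 b1 c1 z0 m1 m2 :: "real^3" and D :: "(real^3) set"
  assumes n0: "a0 \<bullet> z0 = 1" "b0 \<bullet> z0 = 0" "c0 \<bullet> z0 = 0"
    and n1: "a1 \<bullet> z0 = 1" "b1 \<bullet> z0 = 0" "c1 \<bullet> z0 = 0"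
    and Dcl: "closed D" and Danti: "\<And>z. z \<in> D \<Longrightarrow> -z \<in> D \<Longrightarrow> z = 0"
    and z0D: "z0 \<in> D" and zeroD: "0 \<in> D"
    and sg0: "\<And>z. 0 \<le> Gq a0 b0 c0 z z \<Longrightarrow> z \<in> D \<or> -z \<in> D"
    and sg1: "\<And>z. 0 \<le> Gq a1 b1 c1 z z \<Longrightarrow> z \<in> D \<or> -z \<in> D"
    and indep: "\<And>p q r. p *\<^sub>R z0 + q *\<^sub>R m1 + r *\<^sub>R m2 = 0 \<Longrightarrow> p = 0 \<and> q = 0 \<and> r = 0"
    and spans: "\<And>z. \<exists>p q r. z = p *\<^sub>R z0 + q *\<^sub>R m1 + r *\<^sub>R m2"
    and nm: "c0 \<bullet> m1 = 0" "c1 \<bullet> m1 = 0" "0 \<le> b0 \<bullet> m1" "0 \<le> b1 \<bullet> m1"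
            "0 \<le> c0 \<bullet> m2" "0 \<le> c1 \<bullet> m2"
begin

definition Gt :: "real \<Rightarrow> real^3 \<Rightarrow> real^3 \<Rightarrow> real" where
  "Gt t u v = (1 - t) * Gq a0 b0 c0 u v + t * Gq a1 b1 c1 u v"

definition aT :: "real \<Rightarrow> real^3" where
  "aT t = (1 - t) *\<^sub>R a0 + t *\<^sub>R a1"

definition Kv :: "real \<Rightarrow> real^3 \<Rightarrow> real^3" where
  "Kv t u = (aT t \<bullet> u) *\<^sub>R aT t - ((1 - t) *\<^sub>R Gv a0 b0 c0 u + t *\<^sub>R Gv a1 b1 c1 u)"

definition Kt :: "real \<Rightarrow> real^3 \<Rightarrow> real^3 \<Rightarrow> real" where
  "Kt t u v = (aT t \<bullet> u) * (aT t \<bullet> v) - Gt t u v"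

definition bT :: "real \<Rightarrow> real^3" where
  "bT t = (1 / sqrt (Kt t m1 m1)) *\<^sub>R Kv t m1"

definition Kv' :: "real \<Rightarrow> real^3 \<Rightarrow> real^3" where
  "Kv' t u = Kv t u - (bT t \<bullet> u) *\<^sub>R bT t"

definition Kt' :: "real \<Rightarrow> real^3 \<Rightarrow> real^3 \<Rightarrow> real" where
  "Kt' t u v = Kt t u v - (bT t \<bullet> u) * (bT t \<bullet> v)"

definition cT :: "real \<Rightarrow> real^3" where
  "cT t = (1 / sqrt (Kt' t m2 m2)) *\<^sub>R Kv' t m2"

lemma Kv_inner: "Kv t u \<bullet> v = Kt t u v"
  by (simp add: Kv_def Kt_def Gt_def inner_diff_left inner_add_left Gv_inner algebra_simps)

lemma Kv'_inner: "Kv' t u \<bullet> v = Kt' t u v"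
  by (simp add: Kv'_def Kt'_def inner_diff_left Kv_inner)

lemma Gq_sym: "Gq a b c u v = Gq a b c v u"
  by (simp add: Gq_def algebra_simps)

lemma Gt_sym: "Gt t u v = Gt t v u"
  by (simp add: Gt_def Gq_sym)

lemma Kt_sym: "Kt t u v = Kt t v u"
  by (simp add: Kt_def Gt_sym algebra_simps)

lemma Kt'_sym: "Kt' t u v = Kt' t v u"
  by (simp add: Kt'_def Kt_sym algebra_simps)

lemma Gq_lin:
  "Gq a b c (x + y) v = Gq a b c x v + Gq a b c y v"
  "Gq a b c (k *\<^sub>R x) v = k * Gq a b c x v"
  "Gq a b c (x - y) v = Gq a b c x v - Gq a b c y v"
  "Gq a b c (- x) v = - Gq a b c x v"
  by (simp_all add: Gq_def inner_add_right inner_diff_right algebra_simps)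

lemma Gt_lin:
  "Gt t (x + y) v = Gt t x v + Gt t y v"
  "Gt t (k *\<^sub>R x) v = k * Gt t x v"
  "Gt t (x - y) v = Gt t x v - Gt t y v"
  "Gt t (- x) v = - Gt t x v"
  by (simp_all add: Gt_def Gq_lin algebra_simps)

lemma Gt_lin2:
  "Gt t v (x + y) = Gt t v x + Gt t v y"
  "Gt t v (k *\<^sub>R x) = k * Gt t v x"
  "Gt t v (x - y) = Gt t v x - Gt t v y"
  "Gt t v (- x) = - Gt t v x"
  using Gt_lin Gt_sym by metis+

lemma Kt_lin:
  "Kt t (x + y) v = Kt t x v + Kt t y v"
  "Kt t (k *\<^sub>R x) v = k * Kt t x v"
  "Kt t (x - y) v = Kt t x v - Kt t y v"
  "Kt t (- x) v = - Kt t x v"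
  by (simp_all add: Kt_def Gt_lin inner_add_right inner_diff_right algebra_simps)

lemma Kt_lin2:
  "Kt t v (x + y) = Kt t v x + Kt t v y"
  "Kt t v (k *\<^sub>R x) = k * Kt t v x"
  "Kt t v (x - y) = Kt t v x - Kt t v y"
  "Kt t v (- x) = - Kt t v x"
  using Kt_lin Kt_sym by metis+

lemma Kt'_lin:
  "Kt' t (x + y) v = Kt' t x v + Kt' t y v"
  "Kt' t (k *\<^sub>R x) v = k * Kt' t x v"
  by (simp_all add: Kt'_def Kt_lin inner_add_right algebra_simps)

lemma aT_z0: "aT t \<bullet> z0 = 1"
  by (simp add: aT_def inner_add_left n0 n1)

lemma Gq_z0_0: "Gq a0 b0 c0 z0 v = a0 \<bullet> v" by (simp add: Gq_def n0 inner_commute)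
lemma Gq_z0_1: "Gq a1 b1 c1 z0 v = a1 \<bullet> v" by (simp add: Gq_def n1 inner_commute)

lemma Gt_z0: "Gt t z0 v = aT t \<bullet> v"
  by (simp add: Gt_def Gq_z0_0 Gq_z0_1 aT_def inner_add_left)

lemma Gt_z0z0: "Gt t z0 z0 = 1"
  by (simp add: Gt_z0 aT_z0)

lemma Kt_z0: "Kt t z0 v = 0"
  by (simp add: Kt_def aT_z0 Gt_z0)

lemma z0_nz: "z0 \<noteq> 0"
  using indep[of 1 0 0] by auto

lemma sgt:
  assumes t: "0 \<le> t" "t \<le> 1" and g: "0 \<le> Gt t z z"
  shows "z \<in> D \<or> -z \<in> D"
proof (cases "0 \<le> Gq a0 b0 c0 z z")
  case True then show ?thesis using sg0 by blast
next
  case False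
  have "0 \<le> Gq a1 b1 c1 z z"
  proof (rule ccontr)
    assume "\<not> 0 \<le> Gq a1 b1 c1 z z"
    then have n1: "Gq a1 b1 c1 z z < 0" by simp
    have n0: "Gq a0 b0 c0 z z < 0" using False by simp
    have "(1 - t) * Gq a0 b0 c0 z z + t * Gq a1 b1 c1 z z < 0"
    proof (cases "t = 0")
      case True then show ?thesis using n0 by simp
    next
      case False
      then have "t * Gq a1 b1 c1 z z < 0" using n1 t by (simp add: mult_pos_neg)
      moreover have "(1 - t) * Gq a0 b0 c0 z z \<le> 0" using n0 t by (simp add: mult_nonneg_nonpos)
      ultimately show ?thesis by linarith
    qed
    then show False using g by (simp add: Gt_def)
  qed
  then show ?thesis using sg1 by blast
qed

lemma negD_closed: "closed {z. -z \<in> D}"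
proof -
  have "{z. -z \<in> D} = uminus ` D"
  proof
    show "{z. -z \<in> D} \<subseteq> uminus ` D"
    proof
      fix z assume "z \<in> {z. -z \<in> D}"
      then have "-z \<in> D" by simp
      then have "- (- z) \<in> uminus ` D" by (rule imageI)
      then show "z \<in> uminus ` D" by simp
    qed
    show "uminus ` D \<subseteq> {z. -z \<in> D}" by auto
  qed
  then show ?thesis using closed_negations[OF Dcl] by simp
qed

lemma seg_D:
  assumes t: "0 \<le> t" "t \<le> 1"
    and g: "0 \<le> Gt t u u" "0 \<le> Gt t v v" "0 \<le> Gt t u v"
    and nz: "\<And>s. 0 \<le> s \<Longrightarrow> s \<le> 1 \<Longrightarrow> (1 - s) *\<^sub>R u + s *\<^sub>R v \<noteq> 0"
    and uD: "u \<in> D"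
  shows "v \<in> D"
proof (rule ccontr)
  assume vD: "v \<notin> D"
  let ?f = "\<lambda>s::real. (1 - s) *\<^sub>R u + s *\<^sub>R v"
  let ?T = "?f ` {0..1}"
  have "connected ?T"
    by (intro connected_continuous_image connected_Icc continuous_intros)
  moreover have cov: "?T \<subseteq> D \<union> {z. -z \<in> D}"
  proof
    fix w assume "w \<in> ?T"
    then obtain s where s: "0 \<le> s" "s \<le> 1" "w = ?f s" by auto
    have "Gt t w w = (1-s)*((1-s) * Gt t u u + s * Gt t v u) + s * ((1-s) * Gt t u v + s * Gt t v v)"
      unfolding s(3) by (simp only: Gt_lin Gt_lin2)
    also have "\<dots> = (1-s)^2 * Gt t u u + 2 * (s * (1 - s)) * Gt t u v + s^2 * Gt t v v"
      using Gt_sym[of t v u] by (simp add: power2_eq_square algebra_simps)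
    also have "\<dots> \<ge> 0" using g s by (intro add_nonneg_nonneg mult_nonneg_nonneg) auto
    finally show "w \<in> D \<union> {z. -z \<in> D}" using sgt[OF t] by blast
  qed
  moreover have dj: "D \<inter> {z. -z \<in> D} \<inter> ?T = {}"
  proof (rule ccontr)
    assume "D \<inter> {z. -z \<in> D} \<inter> ?T \<noteq> {}"
    then obtain s where s: "0 \<le> s" "s \<le> 1" "?f s \<in> D" "- ?f s \<in> D" by auto
    then have "?f s = 0" using Danti by blast
    then show False using nz s by blast
  qed
  moreover have ne1: "D \<inter> ?T \<noteq> {}"
  proof -
    have "u \<in> ?T" using image_eqI[of u ?f 0 "{0..1}"] by simp
    then show ?thesis using uD by auto
  qed
  moreover have ne2: "{z. -z \<in> D} \<inter> ?T \<noteq> {}"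
  proof -
    have "v \<in> ?T" using image_eqI[of v ?f 1 "{0..1}"] by simp
    moreover have "0 \<le> Gt t v v" using g by simp
    then have "-v \<in> D" using sgt[OF t] vD by blast
    ultimately show ?thesis by auto
  qed
  ultimately have "\<exists>A B. closed A \<and> closed B \<and> ?T \<subseteq> A \<union> B \<and> A \<inter> B \<inter> ?T = {} \<and> A \<inter> ?T \<noteq> {} \<and> B \<inter> ?T \<noteq> {}"
    using Dcl negD_closed by (intro exI[of _ D] exI[of _ "{z. -z \<in> D}"]) simp
  moreover have "connected ?T"
    by (intro connected_continuous_image connected_Icc continuous_intros)
  ultimately show False unfolding connected_closed by argo
qed

lemma cone_D:
  assumes t: "0 \<le> t" "t \<le> 1" and a: "0 \<le> aT t \<bullet> z" and g: "0 \<le> Gt t z z"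
  shows "z \<in> D"
proof (cases "z = 0")
  case True then show ?thesis using zeroD by simp
next
  case False
  show ?thesis
  proof (rule seg_D[OF t _ g _ _ z0D])
    show "0 \<le> Gt t z0 z0" by (simp add: Gt_z0z0)
    show "0 \<le> Gt t z0 z" using a by (simp add: Gt_z0)
    fix s :: real assume s: "0 \<le> s" "s \<le> 1"
    show "(1 - s) *\<^sub>R z0 + s *\<^sub>R z \<noteq> 0"
    proof
      assume e: "(1 - s) *\<^sub>R z0 + s *\<^sub>R z = 0"
      show False
      proof (cases "s = 0")
        case True then show False using e z0_nz by simp
      next
        case sn: False
        have zz: "z = ((s - 1) / s) *\<^sub>R z0"
        proof -
          have "s *\<^sub>R z = (s - 1) *\<^sub>R z0" using e by (simp add: algebra_simps eq_neg_iff_add_eq_0)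
          then have "(1/s) *\<^sub>R (s *\<^sub>R z) = (1/s) *\<^sub>R ((s - 1) *\<^sub>R z0)" by simp
          then show ?thesis using sn by simp
        qed
        have azz: "aT t \<bullet> z = (s - 1) / s" unfolding zz by (simp add: aT_z0)
        have sp: "0 < s" using s sn by simp
        have "0 \<le> (s - 1) / s" using a azz by simp
        then have "0 \<le> s - 1" using sp by (simp add: zero_le_divide_iff)
        then have "s = 1" using s by simp
        then show False using zz False by simp
      qed
    qed
  qed
qed

lemma comb_nz:
  assumes v: "\<And>k. v \<noteq> k *\<^sub>R z0" and e: "p *\<^sub>R z0 + q *\<^sub>R v = 0"
  shows "p = 0 \<and> q = 0"
proof (cases "q = 0")
  case True
  then have "p *\<^sub>R z0 = 0" using e by simp
  then show ?thesis using True z0_nz by simp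
next
  case False
  have "q *\<^sub>R v = (- p) *\<^sub>R z0" using e by (simp add: eq_neg_iff_add_eq_0 add.commute)
  then have "(1/q) *\<^sub>R (q *\<^sub>R v) = (1/q) *\<^sub>R ((- p) *\<^sub>R z0)" by simp
  then have "v = ((- p) / q) *\<^sub>R z0" using False by simp
  then show ?thesis using v by blast
qed

lemma Kt_pos:
  assumes t: "0 \<le> t" "t \<le> 1" and w: "\<And>k. w \<noteq> k *\<^sub>R z0"
  shows "0 < Kt t w w"
proof (rule ccontr)
  assume "\<not> 0 < Kt t w w"
  then have kw: "Kt t w w \<le> 0" by simp
  define w' where "w' = w - (aT t \<bullet> w) *\<^sub>R z0"
  have aw': "aT t \<bullet> w' = 0" by (simp add: w'_def inner_diff_right aT_z0)
  have Kz: "Kt t v z0 = 0" for v using Kt_z0 Kt_sym by metis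
  have "Kt t w' w' = Kt t w w"
    by (simp add: w'_def Kt_lin Kt_lin2 Kt_z0 Kz)
  then have Gw': "0 \<le> Gt t w' w'" using kw aw' by (simp add: Kt_def)
  have w'n: "w' \<noteq> k *\<^sub>R z0" for k
  proof
    assume "w' = k *\<^sub>R z0"
    then have "w = (k + aT t \<bullet> w) *\<^sub>R z0" by (simp add: w'_def algebra_simps)
    then show False using w by blast
  qed
  have "w' \<in> D"
  proof (rule seg_D[OF t _ Gw' _ _ z0D])
    show "0 \<le> Gt t z0 z0" by (simp add: Gt_z0z0)
    show "0 \<le> Gt t z0 w'" by (simp add: Gt_z0 aw')
    fix s :: real assume s: "0 \<le> s" "s \<le> 1"
    show "(1 - s) *\<^sub>R z0 + s *\<^sub>R w' \<noteq> 0"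
      using comb_nz[OF w'n, of "1 - s" s] by auto
  qed
  have "- z0 \<in> D"
  proof (rule seg_D[OF t Gw' _ _ _ \<open>w' \<in> D\<close>])
    show "0 \<le> Gt t (- z0) (- z0)" by (simp add: Gt_lin Gt_lin2 Gt_z0z0)
    show "0 \<le> Gt t w' (- z0)" using Gt_z0[of t w'] aw' by (simp add: Gt_lin2 Gt_sym[of t w' z0])
    fix s :: real assume s: "0 \<le> s" "s \<le> 1"
    show "(1 - s) *\<^sub>R w' + s *\<^sub>R (- z0) \<noteq> 0"
      using comb_nz[OF w'n, of "- s" "1 - s"] by (auto simp: add.commute)
  qed
  then show False using Danti z0D z0_nz by blast
qed

lemma m1_nmult: "m1 \<noteq> k *\<^sub>R z0"
proof
  assume "m1 = k *\<^sub>R z0"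
  then have "(- k) *\<^sub>R z0 + 1 *\<^sub>R m1 + 0 *\<^sub>R m2 = 0" by simp
  then show False using indep[of "- k" 1 0] by simp
qed

lemma K11_pos: "0 \<le> t \<Longrightarrow> t \<le> 1 \<Longrightarrow> 0 < Kt t m1 m1"
  using Kt_pos m1_nmult by blast

lemma bT_inner: "0 \<le> t \<Longrightarrow> t \<le> 1 \<Longrightarrow> bT t \<bullet> u = Kt t m1 u / sqrt (Kt t m1 m1)"
  by (simp add: bT_def Kv_inner)

lemma Kt'_expand: "0 \<le> t \<Longrightarrow> t \<le> 1 \<Longrightarrow> Kt' t u v = Kt t u v - Kt t m1 u * Kt t m1 v / Kt t m1 m1"
  using K11_pos[of t] by (simp add: Kt'_def bT_inner power2_eq_square[symmetric] real_sqrt_pow2 )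

lemma K22_pos:
  assumes t: "0 \<le> t" "t \<le> 1" shows "0 < Kt' t m2 m2"
proof -
  let ?k11 = "Kt t m1 m1" and ?k12 = "Kt t m1 m2" and ?k22 = "Kt t m2 m2"
  have k11: "0 < ?k11" using K11_pos[OF t] .
  define w where "w = ?k12 *\<^sub>R m1 - ?k11 *\<^sub>R m2"
  have wn: "w \<noteq> k *\<^sub>R z0" for k
  proof
    assume "w = k *\<^sub>R z0"
    then have "(- k) *\<^sub>R z0 + ?k12 *\<^sub>R m1 + (- ?k11) *\<^sub>R m2 = 0" by (simp add: w_def algebra_simps)
    then show False using indep k11 by fastforce
  qed
  have "Kt t w w = ?k11 * (?k11 * ?k22 - ?k12 * ?k12)"
    using Kt_sym[of t m2 m1] by (simp add: w_def Kt_lin Kt_lin2 algebra_simps)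
  moreover have "0 < Kt t w w" using Kt_pos[OF t wn] .
  ultimately have "0 < ?k11 * ?k22 - ?k12 * ?k12" using k11 by (simp add: zero_less_mult_iff)
  then have "0 < ?k22 - ?k12 * ?k12 / ?k11" using k11 by (simp add: field_simps)
  then show ?thesis using Kt'_expand[OF t] by simp
qed

lemma cT_inner: "cT t \<bullet> u = Kt' t m2 u / sqrt (Kt' t m2 m2)"
  by (simp add: cT_def Kv'_inner)

lemma Kt'_z0: "0 \<le> t \<Longrightarrow> t \<le> 1 \<Longrightarrow> Kt' t z0 v = 0"
  using Kt_z0[of t] Kt_sym[of t m1 z0] by (simp add: Kt'_expand)

lemma Kt'_m1: "0 \<le> t \<Longrightarrow> t \<le> 1 \<Longrightarrow> Kt' t m1 v = 0"
  using K11_pos[of t] by (simp add: Kt'_expand)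

lemma rank_one:
  assumes t: "0 \<le> t" "t \<le> 1"
  shows "Kt' t u v = (cT t \<bullet> u) * (cT t \<bullet> v)"
proof -
  obtain p q r where u: "u = p *\<^sub>R z0 + q *\<^sub>R m1 + r *\<^sub>R m2" using spans by blast
  have k: "0 < Kt' t m2 m2" using K22_pos[OF t] .
  have 1: "Kt' t u v = r * Kt' t m2 v"
    by (simp add: u Kt'_lin Kt'_z0[OF t] Kt'_m1[OF t])
  have 2: "Kt' t m2 u = r * Kt' t m2 m2"
  proof -
    have "Kt' t u m2 = r * Kt' t m2 m2"
      by (simp add: u Kt'_lin Kt'_z0[OF t] Kt'_m1[OF t])
    then show ?thesis using Kt'_sym[of t u m2] by simp
  qed
  have "(cT t \<bullet> u) * (cT t \<bullet> v) = Kt' t m2 u * Kt' t m2 v / (sqrt (Kt' t m2 m2))^2"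
    by (simp add: cT_inner power2_eq_square)
  also have "\<dots> = r * Kt' t m2 v" using k by (simp add: 2)
  finally show ?thesis using 1 by simp
qed

lemma Gt_decomp:
  assumes t: "0 \<le> t" "t \<le> 1"
  shows "Gt t u v = (aT t \<bullet> u) * (aT t \<bullet> v) - (bT t \<bullet> u) * (bT t \<bullet> v) - (cT t \<bullet> u) * (cT t \<bullet> v)"
  using rank_one[OF t, of u v] by (simp add: Kt'_def Kt_def)

lemma inj_T:
  assumes t: "0 \<le> t" "t \<le> 1" and z: "aT t \<bullet> z = 0" "bT t \<bullet> z = 0" "cT t \<bullet> z = 0"
  shows "z = 0"
proof -
  have g: "Gt t z z = 0" using Gt_decomp[OF t, of z z] z by simp
  have "z \<in> D" using cone_D[OF t] g z by simp
  moreover have "- z \<in> D" using cone_D[OF t, of "- z"] g z by (simp add: Gt_lin Gt_lin2 inner_minus_right)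
  ultimately show ?thesis using Danti by blast
qed

lemma cont_T:
  "continuous_on {0..1} aT" "continuous_on {0..1} bT" "continuous_on {0..1} cT"
proof -
  show ca: "continuous_on {0..1} aT" unfolding aT_def by (intro continuous_intros)
  have cKv: "continuous_on {0..1} (\<lambda>t. Kv t u)" for u
    unfolding Kv_def aT_def by (intro continuous_intros)
  have cKt: "continuous_on {0..1} (\<lambda>t. Kt t u v)" for u v
    unfolding Kt_def Gt_def aT_def by (intro continuous_intros)
  have nz1: "Kt t m1 m1 \<noteq> 0" "sqrt (Kt t m1 m1) \<noteq> 0" if "t \<in> {0..1}" for t
    using K11_pos[of t] that by auto
  have nz2: "Kt' t m2 m2 \<noteq> 0" "sqrt (Kt' t m2 m2) \<noteq> 0" if "t \<in> {0..1}" for t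
    using K22_pos[of t] that by auto
  show cb: "continuous_on {0..1} bT"
    unfolding bT_def
    by (intro continuous_intros cKv cKt) (use nz1 in auto)
  have cbi: "continuous_on {0..1} (\<lambda>t. bT t \<bullet> u)" for u
    by (intro continuous_intros cb)
  have cKv': "continuous_on {0..1} (\<lambda>t. Kv' t u)" for u
    unfolding Kv'_def by (intro continuous_intros cKv cb cbi)
  have cKt': "continuous_on {0..1} (\<lambda>t. Kt' t u v)" for u v
    unfolding Kt'_def by (intro continuous_intros cKt cbi)
  show "continuous_on {0..1} cT"
    unfolding cT_def
    by (intro continuous_intros cKv' cKt') (use nz2 in auto)
qed

lemma endpoint:
  assumes t: "0 \<le> t" "t \<le> 1"
    and kv: "\<And>u. Kv t u = (b \<bullet> u) *\<^sub>R b + (c \<bullet> u) *\<^sub>R c"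
    and cm1: "c \<bullet> m1 = 0" and bm1: "0 \<le> b \<bullet> m1" and cm2: "0 \<le> c \<bullet> m2"
  shows "bT t = b \<and> cT t = c"
proof -
  have kt: "Kt t u v = (b \<bullet> u) * (b \<bullet> v) + (c \<bullet> u) * (c \<bullet> v)" for u v
    using kv[of u] Kv_inner[of t u v] by (simp add: inner_add_left)
  have k11: "Kt t m1 m1 = (b \<bullet> m1)^2" using kt[of m1 m1] cm1 by (simp add: power2_eq_square)
  have pos: "0 < b \<bullet> m1" using K11_pos[OF t] k11 bm1 by (cases "b \<bullet> m1 = 0") auto
  have sq: "sqrt (Kt t m1 m1) = b \<bullet> m1" using k11 bm1 by simp
  have bT: "bT t = b" unfolding bT_def sq kv using cm1 pos by simp
  have kv': "Kv' t u = (c \<bullet> u) *\<^sub>R c" for u unfolding Kv'_def bT kv by simp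
  have k22: "Kt' t m2 m2 = (c \<bullet> m2)^2" using kv'[of m2] Kv'_inner[of t m2 m2] by (simp add: power2_eq_square)
  have pos2: "0 < c \<bullet> m2" using K22_pos[OF t] k22 cm2 by (cases "c \<bullet> m2 = 0") auto
  have sq2: "sqrt (Kt' t m2 m2) = c \<bullet> m2" using k22 cm2 by simp
  have "cT t = c" unfolding cT_def sq2 kv' using pos2 by simp
  then show ?thesis using bT by simp
qed

lemma endpoints:
  "aT 0 = a0" "bT 0 = b0" "cT 0 = c0" "aT 1 = a1" "bT 1 = b1" "cT 1 = c1"
proof -
  show "aT 0 = a0" "aT 1 = a1" by (simp_all add: aT_def)
  have "bT 0 = b0 \<and> cT 0 = c0"
    by (rule endpoint) (auto simp: Kv_def aT_def Gv_def nm)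
  then show "bT 0 = b0" "cT 0 = c0" by auto
  have "bT 1 = b1 \<and> cT 1 = c1"
    by (rule endpoint) (auto simp: Kv_def aT_def Gv_def nm)
  then show "bT 1 = b1" "cT 1 = c1" by auto
qed

end


lemma SF_coords:
  assumes "(A, B) \<in> SF2 M"
  shows "inL (lor (A i))" "inL (lor (B j))" "A i = mat3 (lor (A i))" "B j = mat3 (lor (B j))"
    "M $ i $ j = 2 * (lor (A i) \<bullet> lor (B j))"
proof -
  have pa: "psd2 (A i)" and pb: "psd2 (B j)" and m: "M $ i $ j = trace (A i ** B j)"
    using assms by (auto simp: SF2_def)
  show ea: "A i = mat3 (lor (A i))" using pa by (simp add: psd2_def sym_mat3_lor)
  show eb: "B j = mat3 (lor (B j))" using pb by (simp add: psd2_def sym_mat3_lor)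
  show "inL (lor (A i))" using pa ea psd2_mat3 by metis
  show "inL (lor (B j))" using pb eb psd2_mat3 by metis
  show "M $ i $ j = 2 * (lor (A i) \<bullet> lor (B j))" using m ea eb trace_mat3 by metis
qed

lemma SF_rank:
  fixes M :: "real^'q^'p"
  assumes ab: "(A, B) \<in> SF2 M" and r: "rank M = 3"
  shows "\<And>z. (\<forall>j. lor (B j) \<bullet> z = 0) \<Longrightarrow> z = 0"
    and "\<And>z. \<exists>l. z = (\<Sum>i\<in>UNIV. l i *\<^sub>R lor (A i))"
proof -
  define X2 :: "real^3^'p" where "X2 = (\<chi> i. 2 *\<^sub>R lor (A i))"
  define Y :: "real^3^'q" where "Y = (\<chi> j. lor (B j))"
  have MX: "M = X2 ** transpose Y"
  proof -
    have "(X2 ** transpose Y) $ i $ j = M $ i $ j" for i j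
      using SF_coords(5)[OF ab, of i j]
      by (simp add: X2_def Y_def matrix_matrix_mult_def inner_vec_def sum_distrib_left mult.assoc)
    then show ?thesis by (simp add: vec_eq_iff)
  qed
  have rY: "rank Y = 3"
  proof -
    have "rank M \<le> rank (transpose Y)" unfolding MX by (rule rank_mul_le_right)
    moreover have "rank Y \<le> 3" using rank_bound[of Y] by simp
    ultimately show ?thesis using r by (simp add: rank_transpose)
  qed
  then have injY: "inj ((*v) Y)" using full_rank_injective[of Y] by simp
  show "z = 0" if h: "\<forall>j. lor (B j) \<bullet> z = 0" for z
  proof -
    have "Y *v z = Y *v 0"
      using h by (simp add: vec_eq_iff matrix_vector_mul_component Y_def)
    then show ?thesis using injY by (simp add: inj_on_def)
  qed
  have rX: "rank (transpose X2) = 3"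
  proof -
    have "rank M \<le> rank X2" unfolding MX by (rule rank_mul_le_left)
    moreover have "rank X2 \<le> 3" using rank_bound[of X2] by simp
    ultimately show ?thesis using r by (simp add: rank_transpose)
  qed
  then have surjX: "surj ((*v) (transpose X2))" using full_rank_surjective[of "transpose X2"] by simp
  show "\<exists>l. z = (\<Sum>i\<in>UNIV. l i *\<^sub>R lor (A i))" for z
  proof -
    obtain v where v: "z = transpose X2 *v v" using surjX by (metis surjD)
    have col: "row i X2 = 2 *\<^sub>R lor (A i)" for i
      by (simp add: row_def X2_def vec_eq_iff)
    have "transpose X2 *v v = (\<Sum>i\<in>UNIV. (2 * v$i) *\<^sub>R lor (A i))"
      by (simp add: matrix_mult_sum col scalar_mult_eq_scaleR mult.commute)
    then show ?thesis using v by (intro exI[of _ "\<lambda>i. 2 * v$i"]) simp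
  qed
qed



definition mk2 :: "real \<Rightarrow> real \<Rightarrow> real \<Rightarrow> real \<Rightarrow> real^2^2" where
  "mk2 a b c d = (\<chi> i j. if i = 1 then (if j = 1 then a else b) else (if j = 1 then c else d))"

lemma mk2_entries[simp]:
  "mk2 a b c d $ 1 $ 1 = a" "mk2 a b c d $ 1 $ 2 = b" "mk2 a b c d $ 2 $ 1 = c" "mk2 a b c d $ 2 $ 2 = d"
  by (simp_all add: mk2_def)

lemma mult2_entries:
  "(X ** Y) $ 1 $ 1 = X$1$1 * Y$1$1 + X$1$2 * Y$2$1"
  "(X ** Y) $ 1 $ 2 = X$1$1 * Y$1$2 + X$1$2 * Y$2$2"
  "(X ** Y) $ 2 $ 1 = X$2$1 * Y$1$1 + X$2$2 * Y$2$1"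
  "(X ** Y) $ 2 $ 2 = X$2$1 * Y$1$2 + X$2$2 * Y$2$2"
  for X Y :: "real^2^2"
  by (simp_all add: matrix_matrix_mult_def sum_2)

lemma mat1_entries[simp]:
  "(mat 1 :: real^2^2) $ 1 $ 1 = 1" "(mat 1 :: real^2^2) $ 1 $ 2 = 0"
  "(mat 1 :: real^2^2) $ 2 $ 1 = 0" "(mat 1 :: real^2^2) $ 2 $ 2 = 1"
  by (simp_all add: mat_def)

lemma lor_mat1: "lor (mat 1 :: real^2^2) = vector [1, 0, 0]"
  by (simp add: vec3_eq_iff)

lemma lor_sum: "lor (\<Sum>i\<in>S. A i) = (\<Sum>i\<in>S. lor (A i))"
  by (simp add: vec3_eq_iff sum_component sum.distrib sum_subtractf flip: sum_divide_distrib)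

lemma matrix_add_rdistrib': "((B + C) ** A) = (B ** A) + (C ** (A::real^'n^'m))"
  by (simp add: vec_eq_iff matrix_matrix_mult_def sum.distrib algebra_simps)

lemma conj_sum:
  fixes g :: "real^2^2"
  assumes "finite S"
  shows "(\<Sum>i\<in>S. g ** A i ** transpose g) = g ** (\<Sum>i\<in>S. A i) ** transpose g"
  using assms
proof (induction S rule: finite_induct)
  case empty then show ?case by simp
next
  case (insert x F)
  then show ?case by (simp add: matrix_add_ldistrib matrix_add_rdistrib')
qed

lemma inL_sum:
  assumes "\<And>i. i \<in> S \<Longrightarrow> inL (x i)"
  shows "inL (\<Sum>i\<in>S. x i)"
proof (rule inL_dual)
  fix u assume "inL u"
  then show "0 \<le> u \<bullet> (\<Sum>i\<in>S. x i)"
    using assms inL_inner_nonneg by (simp add: inner_sum_right sum_nonneg)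
qed

lemma inL_zero_first: "inL v \<Longrightarrow> v$1 = 0 \<Longrightarrow> v = 0"
proof -
  assume a: "inL v" "v$1 = 0"
  then have "(v$2)\<^sup>2 + (v$3)\<^sup>2 \<le> 0" by (simp add: inL_def)
  then have "v$2 = 0" "v$3 = 0" by (simp_all add: sum_power2_le_zero_iff)
  then show "v = 0" using a by (simp add: vec3_eq_iff)
qed

lemma interior_sum:
  fixes x :: "'p::finite \<Rightarrow> real^3"
  assumes L: "\<And>i. inL (x i)" and sp: "\<And>z. \<exists>l. z = (\<Sum>i\<in>UNIV. l i *\<^sub>R x i)"
  shows "0 < (\<Sum>i\<in>UNIV. x i)$1 \<and> ((\<Sum>i\<in>UNIV. x i)$2)\<^sup>2 + ((\<Sum>i\<in>UNIV. x i)$3)\<^sup>2 < ((\<Sum>i\<in>UNIV. x i)$1)\<^sup>2"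
proof -
  define s where "s = (\<Sum>i\<in>UNIV. x i)"
  have sL: "inL s" unfolding s_def using L by (intro inL_sum) auto
  have s0: "s \<noteq> 0"
  proof
    assume s0: "s = 0"
    have "(\<Sum>i\<in>UNIV. x i $ 1) = 0" using s0 by (simp add: s_def sum_component[symmetric])
    then have "\<forall>i\<in>UNIV. x i $ 1 = 0" using L by (subst sum_nonneg_eq_0_iff[symmetric]) (auto simp: inL_def)
    then have "\<forall>i. x i = 0" using L inL_zero_first by blast
    moreover obtain l where "vector [1,0,0] = (\<Sum>i\<in>UNIV. l i *\<^sub>R x i)" using sp by blast
    ultimately have "(vector [1,0,0] :: real^3) = 0" by simp
    then show False by (simp add: vec3_eq_iff)
  qed
  have s1: "0 < s$1"
  proof (rule ccontr)
    assume "\<not> 0 < s$1"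
    then have "s$1 = 0" using sL by (simp add: inL_def)
    then show False using s0 sL inL_zero_first by blast
  qed
  define es where "es = (vector [s$1, -(s$2), -(s$3)] :: real^3)"
  have esL: "inL es" using sL by (simp add: es_def inL_def)
  have fs: "es \<bullet> s = (s$1)\<^sup>2 - (s$2)\<^sup>2 - (s$3)\<^sup>2" by (simp add: es_def inner3 power2_eq_square)
  have "(s$2)\<^sup>2 + (s$3)\<^sup>2 < (s$1)\<^sup>2"
  proof (rule ccontr)
    assume "\<not> ?thesis"
    then have "es \<bullet> s = 0" using sL fs by (simp add: inL_def)
    then have "(\<Sum>i\<in>UNIV. es \<bullet> x i) = 0" by (simp add: s_def inner_sum_right)
    then have z: "\<forall>i\<in>UNIV. es \<bullet> x i = 0"
      using esL L inL_inner_nonneg by (subst sum_nonneg_eq_0_iff[symmetric]) auto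
    obtain l where "es = (\<Sum>i\<in>UNIV. l i *\<^sub>R x i)" using sp by blast
    then have "es \<bullet> es = 0" using z by (simp add: inner_sum_right)
    then have "es = 0" by simp
    then show False using s1 by (simp add: es_def vec3_eq_iff)
  qed
  then show ?thesis using s1 by (simp add: s_def)
qed

lemma chol:
  assumes p: "0 < p11" "0 < p11 * p22 - p12 * p12"
  shows "\<exists>g::real^2^2. invertible g \<and> g ** mk2 p11 p12 p12 p22 ** transpose g = mat 1"
proof -
  define d where "d = p11 * p22 - p12 * p12"
  define \<sigma> where "\<sigma> = sqrt p11"
  define u where "u = sqrt (d / p11)"
  have d: "0 < d" using p by (simp add: d_def)
  have s2: "\<sigma> * \<sigma> = p11" and sp: "0 < \<sigma>" using p by (simp_all add: \<sigma>_def)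
  have u2: "u * u = d / p11" and up: "0 < u" using p d by (simp_all add: u_def)
  define g where "g = mk2 (1/\<sigma>) 0 (- p12 / (p11 * u)) (1/u)"
  define h where "h = mk2 \<sigma> 0 (p12 / \<sigma>) u"
  have gh: "g ** h = mat 1"
    unfolding mat2_eq_iff using sp up s2 p
    by (simp add: g_def h_def mult2_entries field_simps)
  then have inv: "invertible g" using matrix_left_right_inverse invertible_def by blast
  have "g ** mk2 p11 p12 p12 p22 ** transpose g = mat 1"
  proof -
    have e1: "p22 - p12 * p12 / p11 = d / p11" using p by (simp add: d_def field_simps)
    show ?thesis unfolding mat2_eq_iff using sp up s2 u2 p e1
      by (simp add: g_def mult2_entries field_simps power2_eq_square)
  qed
  then show ?thesis using inv by blast
qed

lemma rot_lor:
  fixes X :: "real^2^2"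
  assumes sym: "transpose X = X"
  shows "lor (mk2 c (- q) q c ** X ** transpose (mk2 c (- q) q c)) =
     vector [(c* c + q* q) * lor X $ 1, (c* c - q* q) * lor X $ 2 - 2* q* c * lor X $ 3,
             2* q* c * lor X $ 2 + (c* c - q* q) * lor X $ 3]"
proof -
  have x: "X$2$1 = X$1$2" using sym by (metis transpose_nth)
  show ?thesis unfolding vec3_eq_iff using x
    by (simp add: mult2_entries algebra_simps field_simps)
qed

lemma rot_inv: "c* c + q* q = 1 \<Longrightarrow> invertible (mk2 c (- q) q c)"
  unfolding invertible_def
  by (rule exI[of _ "mk2 c q (-q) c"]) (simp add: mat2_eq_iff mult2_entries algebra_simps)

lemma rot_id: "c* c + q* q = 1 \<Longrightarrow> mk2 c (- q) q c ** mat 1 ** transpose (mk2 c (- q) q c) = mat 1"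
  by (simp add: mat2_eq_iff mult2_entries algebra_simps)

lemma refl_lor:
  fixes X :: "real^2^2"
  assumes sym: "transpose X = X"
  shows "lor (mk2 1 0 0 (-1) ** X ** transpose (mk2 1 0 0 (-1))) = vector [lor X $ 1, lor X $ 2, - lor X $ 3]"
  unfolding vec3_eq_iff by (simp add: mult2_entries)

lemma refl_inv: "invertible (mk2 1 0 0 (-1))"
  unfolding invertible_def
  by (rule exI[of _ "mk2 1 0 0 (-1)"]) (simp add: mat2_eq_iff mult2_entries)

lemma rot_exists: "\<exists>c q. c* c + q* q = 1 \<and> 2* q* c* b + (c* c - q* q)* d = 0 \<and> 0 \<le> (c* c - q* q)* b - 2* q* c* d"
  for b d :: real
proof (cases "b* b + d* d = 0")
  case True
  then have "b = 0" "d = 0" by (simp_all add: sum_squares_eq_zero_iff)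
  then show ?thesis by (intro exI[of _ 1] exI[of _ 0]) simp
next
  case False
  define r where "r = sqrt (b* b + d* d)"
  have nn: "0 \<le> b* b + d* d" by (intro add_nonneg_nonneg) simp_all
  then have pos: "0 < b* b + d* d" using False by linarith
  have rp: "0 < r" using pos by (simp add: r_def)
  have r2: "r * r = b* b + d* d" by (simp add: r_def add_nonneg_nonneg)
  have "(b/r)\<^sup>2 + (-d/r)\<^sup>2 = (b* b + d* d)/(r* r)" by (simp add: power2_eq_square add_divide_distrib)
  also have "\<dots> = 1" using r2 pos by (metis divide_self less_irrefl)
  finally have "(b/r)\<^sup>2 + (-d/r)\<^sup>2 = 1" .
  then obtain \<phi> where ph: "b/r = cos \<phi>" "-d/r = sin \<phi>" by (metis sincos_total_2pi)
  define c where "c = cos (\<phi>/2)"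
  define q where "q = sin (\<phi>/2)"
  have cs: "c* c + q* q = 1" by (simp add: c_def q_def flip: power2_eq_square)
  have c2: "c* c - q* q = b/r" using ph(1) cos_double[of "\<phi>/2"] by (simp add: c_def q_def power2_eq_square)
  have s2: "2* q* c = -d/r" using ph(2) sin_double[of "\<phi>/2"] by (simp add: c_def q_def)
  have e1: "2* q* c* b + (c* c - q* q)* d = 0" unfolding c2 s2 by (simp add: field_simps)
  have "(c* c - q* q)* b - 2* q* c* d = r" unfolding c2 s2 using rp r2 by (simp add: field_simps)
  then have e2: "0 \<le> (c* c - q* q)* b - 2* q* c* d" using rp by simp
  show ?thesis using cs e1 e2 by blast
qed



lemma cross_comp[simp]:
  "cross3 a b $ 1 = a$2 * b$3 - a$3 * b$2" "cross3 a b $ 2 = a$3 * b$1 - a$1 * b$3" "cross3 a b $ 3 = a$1 * b$2 - a$2 * b$1"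
  by (simp_all add: cross3_def)

lemma inner_vector3: "(vector [p1, p2, p3] :: real^3) \<bullet> vector [q1, q2, q3] = p1 * q1 + p2 * q2 + p3 * q3"
  by (simp add: inner3)

lemma inner_vr: "(u::real^3) \<bullet> vector [p, q, r] = u$1 * p + u$2 * q + u$3 * r"
  by (simp add: inner3)

lemma cross_id:
  "(a \<bullet> x) *\<^sub>R cross3 b c + (b \<bullet> x) *\<^sub>R cross3 c a + (c \<bullet> x) *\<^sub>R cross3 a b = (a \<bullet> cross3 b c) *\<^sub>R x"
  unfolding vec3_eq_iff by (simp add: inner3 algebra_simps)

lemma cross_cyc: "b \<bullet> cross3 c a = a \<bullet> cross3 b c" "c \<bullet> cross3 a b = a \<bullet> cross3 b c"
  by (simp_all add: inner3 algebra_simps)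

lemma cross_self: "a \<bullet> cross3 c a = 0" "a \<bullet> cross3 a b = 0" "b \<bullet> cross3 b c = 0"
  "b \<bullet> cross3 a b = 0" "c \<bullet> cross3 b c = 0" "c \<bullet> cross3 c a = 0"
  by (simp_all add: inner3 algebra_simps)

definition Tinv :: "real^3 \<Rightarrow> real^3 \<Rightarrow> real^3 \<Rightarrow> real^3 \<Rightarrow> real^3" where
  "Tinv a b c y = (1 / (a \<bullet> cross3 b c)) *\<^sub>R vector [cross3 b c \<bullet> y, cross3 c a \<bullet> y, cross3 a b \<bullet> y]"

definition Tv :: "real^3 \<Rightarrow> real^3 \<Rightarrow> real^3 \<Rightarrow> real^3 \<Rightarrow> real^3" where
  "Tv a b c x = vector [a \<bullet> x, b \<bullet> x, c \<bullet> x]"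

lemma Tv_Tinv:
  assumes "a \<bullet> cross3 b c \<noteq> 0"
  shows "Tv a b c x \<bullet> Tinv a b c y = x \<bullet> y"
proof -
  have "Tv a b c x \<bullet> Tinv a b c y =
      (1 / (a \<bullet> cross3 b c)) * (((a \<bullet> x) *\<^sub>R cross3 b c + (b \<bullet> x) *\<^sub>R cross3 c a + (c \<bullet> x) *\<^sub>R cross3 a b) \<bullet> y)"
    by (simp add: Tv_def Tinv_def inner_vector3 inner_add_left algebra_simps)
  also have "\<dots> = x \<bullet> y" unfolding cross_id using assms by simp
  finally show ?thesis .
qed

definition Tpre :: "real^3 \<Rightarrow> real^3 \<Rightarrow> real^3 \<Rightarrow> real^3 \<Rightarrow> real^3" where
  "Tpre a b c u = (1 / (a \<bullet> cross3 b c)) *\<^sub>R ((u$1) *\<^sub>R cross3 b c + (u$2) *\<^sub>R cross3 c a + (u$3) *\<^sub>R cross3 a b)"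

lemma Tinv_pre:
  fixes u y :: "real^3"
  assumes d: "a \<bullet> cross3 b c \<noteq> 0"
  shows "a \<bullet> Tpre a b c u = u$1" "b \<bullet> Tpre a b c u = u$2" "c \<bullet> Tpre a b c u = u$3"
    "u \<bullet> Tinv a b c y = Tpre a b c u \<bullet> y"
proof -
  show "a \<bullet> Tpre a b c u = u$1" using d by (simp add: Tpre_def inner_add_right cross_self cross_cyc)
  show "b \<bullet> Tpre a b c u = u$2" using d by (simp add: Tpre_def inner_add_right cross_self cross_cyc)
  show "c \<bullet> Tpre a b c u = u$3" using d by (simp add: Tpre_def inner_add_right cross_self cross_cyc)
  show "u \<bullet> Tinv a b c y = Tpre a b c u \<bullet> y"
    by (simp add: Tpre_def Tinv_def inner_add_left inner_vr algebra_simps)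
qed

lemma Tv_std: "Tv (vector [1,0,0]) (vector [0,1,0]) (vector [0,0,1]) x = x"
  by (simp add: Tv_def vec3_eq_iff inner3)

lemma Tinv_std: "Tinv (vector [1,0,0]) (vector [0,1,0]) (vector [0,0,1]) y = y"
  by (simp add: Tinv_def vec3_eq_iff inner3)

lemma Tv_rows: "Tv (R$1) (R$2) (R$3) x = R *v x"
  by (simp add: Tv_def vec3_eq_iff matrix_vector_mul_component)

lemma vector3_decomp: "vector [p, q, r] = p *\<^sub>R vector [1,0,0] + q *\<^sub>R vector [0,1,0] + r *\<^sub>R (vector [0,0,1] :: real^3)"
  by (simp add: vec3_eq_iff)

lemma cont_vector3:
  assumes "continuous_on S f" "continuous_on S g" "continuous_on S h"
  shows "continuous_on S (\<lambda>t. vector [f t, g t, h t] :: real^3)"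
proof -
  have e: "(\<lambda>t. vector [f t, g t, h t] :: real^3) = (\<lambda>t. \<chi> i. if i = 1 then f t else if i = 2 then g t else h t)"
    by (rule ext) (simp add: vec3_eq_iff)
  have "continuous_on S (\<lambda>t. if i = 1 then f t else if i = 2 then g t else h t)" for i :: 3
    using assms by (cases "i = 1"; cases "i = 2") auto
  then show ?thesis unfolding e by (intro continuous_on_vec_lambda)
qed

lemma cont_mat3:
  assumes f: "continuous_on S f"
  shows "continuous_on S (\<lambda>t. mat3 (f t))"
proof -
  have c: "continuous_on S (\<lambda>t. f t $ k)" for k using f by (intro continuous_intros)
  have "continuous_on S (\<lambda>t. if i = 1 \<and> j = 1 then f t $ 1 + f t $ 2 else if i = 2 \<and> j = 2 then f t $ 1 - f t $ 2 else f t $ 3)" for i j :: 2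
    using c f by (cases "i = 1 \<and> j = 1"; cases "i = 2 \<and> j = 2") (auto intro!: continuous_intros)
  then show ?thesis unfolding mat3_def by (intro continuous_on_vec_lambda)
qed

lemma det_nz:
  assumes "\<And>z. a \<bullet> z = 0 \<Longrightarrow> b \<bullet> z = 0 \<Longrightarrow> c \<bullet> z = 0 \<Longrightarrow> z = 0"
  shows "a \<bullet> cross3 b c \<noteq> 0"
proof -
  let ?T = "vector [a, b, c] :: real^3^3"
  have "\<forall>x. ?T *v x = 0 \<longrightarrow> x = 0"
    using assms by (simp add: vec3_eq_iff matrix_vector_mul_component)
  then have "\<exists>B. B ** ?T = mat 1" by (simp add: matrix_left_invertible_ker)
  then have "invertible ?T" using invertible_left_inverse by blast
  then have "det ?T \<noteq> 0" by (simp add: invertible_det_nz)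
  then show ?thesis by (simp add: dot_cross_det)
qed



lemma mv_sum: "finite S \<Longrightarrow> (A::real^'n^'m) *v (\<Sum>i\<in>S. f i) = (\<Sum>i\<in>S. A *v f i)"
  by (induction rule: finite_induct) (simp_all add: matrix_vector_right_distrib)

lemma inL_Tv: "inL (Tv a b c x) \<longleftrightarrow> 0 \<le> a \<bullet> x \<and> (b \<bullet> x)\<^sup>2 + (c \<bullet> x)\<^sup>2 \<le> (a \<bullet> x)\<^sup>2"
  by (simp add: inL_def Tv_def)

lemma Gq_std: "Gq (vector [1,0,0]) (vector [0,1,0]) (vector [0,0,1]) z z = (z$1)\<^sup>2 - (z$2)\<^sup>2 - (z$3)\<^sup>2"
  by (simp add: Gq_def inner3 power2_eq_square)

lemma Gq_rows: "Gq (R$1) (R$2) (R$3) z z = ((R *v z)$1)\<^sup>2 - ((R *v z)$2)\<^sup>2 - ((R *v z)$3)\<^sup>2"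
  by (simp add: Gq_def matrix_vector_mul_component power2_eq_square)

lemma inL_or_neg: "(z$2)\<^sup>2 + (z$3)\<^sup>2 \<le> (z$1)\<^sup>2 \<Longrightarrow> inL z \<or> inL (- z)"
  by (cases "0 \<le> z$1") (auto simp: inL_def)

lemma path_exists:
  fixes M :: "real^'q^'p"
  assumes r: "rank M = 3"
    and h0: "(A0, B0) \<in> SF2 M" and h1: "(A1, B1) \<in> SF2 M"
    and s0: "(\<Sum>i\<in>UNIV. lor (A0 i)) = vector [1,0,0]"
    and s1: "(\<Sum>i\<in>UNIV. lor (A1 i)) = vector [1,0,0]"
    and R: "\<And>i. R *v lor (A0 i) = lor (A1 i)"
    and R32: "R$3$2 = 0" and R22: "0 \<le> R$2$2" and R33: "0 \<le> R$3$3"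
  shows "\<exists>T. connected T \<and> T \<subseteq> SF2 M \<and> (A0, B0) \<in> T \<and> (A1, B1) \<in> T"
proof -
  define e1 :: "real^3" where "e1 = vector [1,0,0]"
  define e2 :: "real^3" where "e2 = vector [0,1,0]"
  define e3 :: "real^3" where "e3 = vector [0,0,1]"
  define D where "D = {z. \<forall>j. 0 \<le> z \<bullet> lor (B0 j)}"
  note c0 = SF_coords[OF h0] and c1 = SF_coords[OF h1]
  note k0 = SF_rank[OF h0 r] and k1 = SF_rank[OF h1 r]
  have Re1: "R *v e1 = e1"
  proof -
    have "R *v e1 = (\<Sum>i\<in>UNIV. R *v lor (A0 i))" unfolding e1_def s0[symmetric] by (simp add: mv_sum)
    also have "\<dots> = e1" using s1 R by (simp add: e1_def)
    finally show ?thesis .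
  qed
  have Ry: "(R *v z) \<bullet> lor (B1 j) = z \<bullet> lor (B0 j)" for z j
  proof -
    obtain l where z: "z = (\<Sum>i\<in>UNIV. l i *\<^sub>R lor (A0 i))" using k0(2) by blast
    have "R *v z = (\<Sum>i\<in>UNIV. l i *\<^sub>R lor (A1 i))" unfolding z by (simp add: mv_sum matrix_vector_mult_scaleR R)
    then have "(R *v z) \<bullet> lor (B1 j) = (\<Sum>i\<in>UNIV. l i * (lor (A1 i) \<bullet> lor (B1 j)))"
      by (simp add: inner_sum_left)
    also have "\<dots> = (\<Sum>i\<in>UNIV. l i * (lor (A0 i) \<bullet> lor (B0 j)))"
      using c0(5) c1(5) by (metis (no_types, lifting) mult_cancel_left1 nonzero_mult_div_cancel_left zero_neq_numeral)
    also have "\<dots> = z \<bullet> lor (B0 j)" unfolding z by (simp add: inner_sum_left)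
    finally show ?thesis .
  qed
  have Dcl: "closed D"
  proof -
    have "D = (\<Inter>j. {z. 0 \<le> lor (B0 j) \<bullet> z})" by (auto simp: D_def inner_commute)
    then show ?thesis by (simp add: closed_INT closed_halfspace_ge)
  qed
  have Danti: "z = 0" if "z \<in> D" "- z \<in> D" for z
  proof -
    have "\<forall>j. lor (B0 j) \<bullet> z = 0" using that by (auto simp: D_def inner_commute intro: antisym)
    then show ?thesis using k0(1) by blast
  qed
  have z0D: "e1 \<in> D" using c0(2) by (simp add: D_def e1_def inner3 inL_def)
  have zeroD: "0 \<in> D" by (simp add: D_def)
  have LD: "z \<in> D" if "inL z" for z using that c0(2) inL_inner_nonneg by (simp add: D_def)
  have sg0: "z \<in> D \<or> - z \<in> D" if "0 \<le> Gq e1 e2 e3 z z" for z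
    using that inL_or_neg[of z] LD unfolding e1_def e2_def e3_def Gq_std by fastforce
  have sg1: "z \<in> D \<or> - z \<in> D" if "0 \<le> Gq (R$1) (R$2) (R$3) z z" for z
  proof -
    have "inL (R *v z) \<or> inL (- (R *v z))" using that inL_or_neg[of "R *v z"] by (simp add: Gq_rows)
    then show ?thesis
    proof
      assume "inL (R *v z)"
      then have "0 \<le> (R *v z) \<bullet> lor (B1 j)" for j using c1(2) inL_inner_nonneg by blast
      then show ?thesis using Ry by (simp add: D_def)
    next
      assume "inL (- (R *v z))"
      then have "0 \<le> (- (R *v z)) \<bullet> lor (B1 j)" for j using c1(2) inL_inner_nonneg by blast
      have neg: "R *v (- z) = - (R *v z)" using matrix_vector_mult_scaleR[of R "-1" z] by simp
      then have "0 \<le> (R *v (- z)) \<bullet> lor (B1 j)" for j using \<open>\<And>j. 0 \<le> (- (R *v z)) \<bullet> lor (B1 j)\<close> by simp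
      then show ?thesis using Ry by (simp add: D_def del: inner_minus_left)
    qed
  qed
  have indep: "p = 0 \<and> q = 0 \<and> s = 0" if "p *\<^sub>R e1 + q *\<^sub>R e2 + s *\<^sub>R e3 = 0" for p q s
    using that by (simp add: e1_def e2_def e3_def vec3_eq_iff)
  have spans: "\<exists>p q s. z = p *\<^sub>R e1 + q *\<^sub>R e2 + s *\<^sub>R e3" for z
    by (intro exI[of _ "z$1"] exI[of _ "z$2"] exI[of _ "z$3"]) (simp add: e1_def e2_def e3_def vec3_eq_iff)
  have n1: "R$1 \<bullet> e1 = 1" "R$2 \<bullet> e1 = 0" "R$3 \<bullet> e1 = 0"
    using Re1 by (simp_all add: vec3_eq_iff matrix_vector_mul_component e1_def)
  have cr: "core e1 e2 e3 (R$1) (R$2) (R$3) e1 e2 e3 D"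
    unfolding core_def
    using n1 Dcl Danti z0D zeroD sg0 sg1 indep spans R32 R22 R33
    by (simp add: e1_def e2_def e3_def inner3)
  interpret C: core e1 e2 e3 "R$1" "R$2" "R$3" e1 e2 e3 D by (rule cr)
  have det: "C.aT t \<bullet> cross3 (C.bT t) (C.cT t) \<noteq> 0" if "0 \<le> t" "t \<le> 1" for t
    by (intro det_nz C.inj_T[OF that]) auto
  define P where "P t = ((\<lambda>i. mat3 (Tv (C.aT t) (C.bT t) (C.cT t) (lor (A0 i)))),
                         (\<lambda>j. mat3 (Tinv (C.aT t) (C.bT t) (C.cT t) (lor (B0 j)))))" for t
  have Pin: "P t \<in> SF2 M" if t: "0 \<le> t" "t \<le> 1" for t
  proof -
    have Apsd: "psd2 (mat3 (Tv (C.aT t) (C.bT t) (C.cT t) (lor (A0 i))))" for i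
    proof -
      let ?x = "lor (A0 i)"
      have r1: "R$1 \<bullet> ?x = lor (A1 i) $ 1" using R[of i] by (metis matrix_vector_mul_component)
      have a0: "0 \<le> C.aT t \<bullet> ?x"
      proof -
        have "C.aT t \<bullet> ?x = (1 - t) * (e1 \<bullet> ?x) + t * (R$1 \<bullet> ?x)" by (simp add: C.aT_def inner_add_left)
        also have "e1 \<bullet> ?x = ?x $ 1" by (simp add: e1_def inner3)
        finally have "C.aT t \<bullet> ?x = (1 - t) * (?x $ 1) + t * (lor (A1 i) $ 1)" by (simp only: r1)
        then show ?thesis using c0(1)[of i] c1(1)[of i] t by (simp add: inL_def)
      qed
      have g: "0 \<le> C.Gt t ?x ?x"
      proof -
        have "0 \<le> Gq e1 e2 e3 ?x ?x" using c0(1)[of i] by (simp add: e1_def e2_def e3_def Gq_std inL_def)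
        moreover have "0 \<le> Gq (R$1) (R$2) (R$3) ?x ?x" using c1(1)[of i] R[of i] by (simp add: Gq_rows inL_def)
        ultimately show ?thesis using t by (simp add: C.Gt_def)
      qed
      have "inL (Tv (C.aT t) (C.bT t) (C.cT t) ?x)"
        using a0 g C.Gt_decomp[OF t, of ?x ?x] by (simp add: inL_Tv power2_eq_square)
      then show ?thesis by (simp add: psd2_mat3)
    qed
    have Bpsd: "psd2 (mat3 (Tinv (C.aT t) (C.bT t) (C.cT t) (lor (B0 j))))" for j
    proof -
      have "inL (Tinv (C.aT t) (C.bT t) (C.cT t) (lor (B0 j)))"
      proof (rule inL_dual)
        fix u :: "real^3" assume u: "inL u"
        define z where "z = Tpre (C.aT t) (C.bT t) (C.cT t) u"
        note tp13 = Tinv_pre(1-3)[OF det[OF t], of u, folded z_def]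
        note tp4 = Tinv_pre(4)[OF det[OF t], of u "lor (B0 j)", folded z_def]
        have "0 \<le> C.aT t \<bullet> z" using tp13(1) u by (simp add: inL_def)
        moreover have "0 \<le> C.Gt t z z"
          using C.Gt_decomp[OF t, of z z] tp13 u by (simp add: inL_def power2_eq_square)
        ultimately have "z \<in> D" by (rule C.cone_D[OF t])
        then show "0 \<le> u \<bullet> Tinv (C.aT t) (C.bT t) (C.cT t) (lor (B0 j))" using tp4 by (simp add: D_def)
      qed
      then show ?thesis by (simp add: psd2_mat3)
    qed
    have tr: "M$i$j = trace (mat3 (Tv (C.aT t) (C.bT t) (C.cT t) (lor (A0 i))) **
                             mat3 (Tinv (C.aT t) (C.bT t) (C.cT t) (lor (B0 j))))" for i j
      using c0(5)[of i j] Tv_Tinv[OF det[OF t]] by (simp add: trace_mat3)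
    show ?thesis using Apsd Bpsd tr by (simp add: SF2_def P_def)
  qed
  have cP: "continuous_on {0..1} P"
  proof -
    note ct = C.cont_T
    have cd: "continuous_on {0..1} (\<lambda>t. C.aT t \<bullet> cross3 (C.bT t) (C.cT t))"
      by (intro continuous_intros continuous_on_cross ct)
    have cTv: "continuous_on {0..1} (\<lambda>t. Tv (C.aT t) (C.bT t) (C.cT t) x)" for x
      unfolding Tv_def by (intro cont_vector3 continuous_intros ct)
    have cTinv: "continuous_on {0..1} (\<lambda>t. Tinv (C.aT t) (C.bT t) (C.cT t) y)" for y
      unfolding Tinv_def using det
      by (intro cont_vector3 continuous_intros continuous_on_cross ct cd) auto
    show ?thesis unfolding P_def
      by (intro continuous_intros cont_mat3 cTv cTinv)
  qed
  have P0: "P 0 = (A0, B0)"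
    using C.endpoints c0(3) c0(4) Tv_std Tinv_std
    by (simp add: P_def fun_eq_iff e1_def e2_def e3_def)
  have d1: "R$1 \<bullet> cross3 (R$2) (R$3) \<noteq> 0" using det[of 1] C.endpoints by simp
  have TinvR: "Tinv (R$1) (R$2) (R$3) (lor (B0 j)) = lor (B1 j)" for j
  proof -
    let ?w = "Tinv (R$1) (R$2) (R$3) (lor (B0 j))"
    have o: "lor (A1 i) \<bullet> (?w - lor (B1 j)) = 0" for i
    proof -
      have "lor (A1 i) \<bullet> ?w = lor (A0 i) \<bullet> lor (B0 j)"
        using Tv_Tinv[OF d1, of "lor (A0 i)" "lor (B0 j)"] by (simp add: Tv_rows R)
      also have "\<dots> = lor (A1 i) \<bullet> lor (B1 j)" using c0(5)[of i j] c1(5)[of i j] by simp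
      finally show ?thesis by (simp add: inner_diff_right)
    qed
    obtain l where l: "?w - lor (B1 j) = (\<Sum>i\<in>UNIV. l i *\<^sub>R lor (A1 i))" using k1(2) by blast
    have "(?w - lor (B1 j)) \<bullet> (?w - lor (B1 j)) = 0"
      by (subst (1) l) (simp add: inner_sum_left o)
    then show ?thesis by simp
  qed
  have P1: "P 1 = (A1, B1)"
    using C.endpoints c1(3) c1(4) TinvR
    by (simp add: P_def fun_eq_iff Tv_rows R)
  show ?thesis
  proof (intro exI[of _ "P ` {0..1}"] conjI)
    show "connected (P ` {0..1})" by (rule connected_continuous_image[OF cP connected_Icc])
    show "P ` {0..1} \<subseteq> SF2 M" using Pin by auto
    show "(A0, B0) \<in> P ` {0..1}" using P0 by (metis atLeastAtMost_iff image_eqI order_refl zero_le_one)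
    show "(A1, B1) \<in> P ` {0..1}" using P1 by (metis atLeastAtMost_iff image_eqI order_refl zero_le_one)
  qed
qed



lemma mat3_sum: "mat3 (\<Sum>i\<in>S. v i) = (\<Sum>i\<in>S. mat3 (v i))"
  unfolding mat2_eq_iff by (simp add: sum_component sum.distrib sum_subtractf)

lemma mat3_mk2: "mat3 s = mk2 (s$1 + s$2) (s$3) (s$3) (s$1 - s$2)"
  unfolding mat2_eq_iff by simp

lemma chol_norm:
  fixes M :: "real^'q^'p"
  assumes h: "(A, B) \<in> SF2 M" and r: "rank M = 3"
  shows "\<exists>g. invertible g \<and> (\<Sum>i\<in>UNIV. lor (g ** A i ** transpose g)) = vector [1,0,0]"
proof -
  note c = SF_coords[OF h] and k = SF_rank[OF h r]
  define s where "s = (\<Sum>i\<in>UNIV. lor (A i))"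
  have int: "0 < s$1 \<and> (s$2)\<^sup>2 + (s$3)\<^sup>2 < (s$1)\<^sup>2"
    unfolding s_def by (rule interior_sum[OF c(1) k(2)])
  have P: "(\<Sum>i\<in>UNIV. A i) = mat3 s"
  proof -
    have "(\<Sum>i\<in>UNIV. A i) = (\<Sum>i\<in>UNIV. mat3 (lor (A i)))" by (intro sum.cong refl c(3))
    also have "\<dots> = mat3 s" by (simp add: s_def mat3_sum)
    finally show ?thesis .
  qed
  have "(\<bar>s$2\<bar>)\<^sup>2 < (s$1)\<^sup>2" using int zero_le_power2[of "s$3"] unfolding power2_abs by linarith
  then have a2: "\<bar>s$2\<bar> < s$1" by (rule power_less_imp_less_base) (use int in linarith)
  have p11: "0 < s$1 + s$2" using a2 by linarith
  have "(s$1 + s$2) * (s$1 - s$2) - s$3 * s$3 = (s$1)\<^sup>2 - (s$2)\<^sup>2 - (s$3)\<^sup>2"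
    by (simp add: power2_eq_square algebra_simps)
  then have dd: "0 < (s$1 + s$2) * (s$1 - s$2) - s$3 * s$3" using int by linarith
  obtain g :: "real^2^2" where g: "invertible g" "g ** mk2 (s$1 + s$2) (s$3) (s$3) (s$1 - s$2) ** transpose g = mat 1"
    using chol[OF p11 dd] by blast
  have "(\<Sum>i\<in>UNIV. lor (g ** A i ** transpose g)) = lor (\<Sum>i\<in>UNIV. g ** A i ** transpose g)"
    by (simp add: lor_sum)
  also have "\<dots> = lor (g ** (\<Sum>i\<in>UNIV. A i) ** transpose g)" by (simp add: conj_sum)
  also have "\<dots> = vector [1,0,0]" using g(2) by (simp add: P mat3_mk2 lor_mat1)
  finally show ?thesis using g(1) by blast
qed

lemma R_exists:
  fixes M :: "real^'q^'p"
  assumes h0: "(A0, B0) \<in> SF2 M" and h1: "(A1, B1) \<in> SF2 M" and r: "rank M = 3"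
  shows "\<exists>R. \<forall>i. R *v lor (A0 i) = lor (A1 i)"
proof -
  note c0 = SF_coords[OF h0] and c1 = SF_coords[OF h1] and k1 = SF_rank[OF h1 r]
  define Y0 :: "real^3^'q" where "Y0 = (\<chi> j. lor (B0 j))"
  define Y1 :: "real^3^'q" where "Y1 = (\<chi> j. lor (B1 j))"
  have "\<forall>x. Y1 *v x = 0 \<longrightarrow> x = 0"
    using k1(1) by (simp add: Y1_def vec_eq_iff matrix_vector_mul_component)
  then obtain W where W: "W ** Y1 = mat 1" using matrix_left_invertible_ker by blast
  have "(W ** Y0) *v lor (A0 i) = lor (A1 i)" for i
  proof -
    have "Y0 *v lor (A0 i) = Y1 *v lor (A1 i)"
      using c0(5)[of i] c1(5)[of i]
      by (simp add: Y0_def Y1_def vec_eq_iff matrix_vector_mul_component inner_commute)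
    then have "(W ** Y0) *v lor (A0 i) = (W ** Y1) *v lor (A1 i)"
      by (simp add: matrix_vector_mul_assoc[symmetric])
    then show ?thesis using W by simp
  qed
  then show ?thesis by blast
qed

lemma Lam_mv:
  "(vector [vector [1,0,0], vector [0,k,-m], vector [0,m,k]] :: real^3^3) *v l = vector [l$1, k * l$2 - m * l$3, m * l$2 + k * l$3]"
  by (simp add: vec3_eq_iff matrix_vector_mul_component inner3)

lemma Lam_e1:
  "(vector [vector [1,0,0], vector [0,k,-m], vector [0,m,k]] :: real^3^3) *v vector [1,0,0] = vector [1,0,0]"
  by (simp add: Lam_mv)

lemma Ref_mv:
  "(vector [vector [1,0,0], vector [0,1,0], vector [0,0,-1]] :: real^3^3) *v l = vector [l$1, l$2, - l$3]"
  by (simp add: vec3_eq_iff matrix_vector_mul_component inner3)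

lemma rot_norm:
  fixes M :: "real^'q^'p"
  assumes h: "(A1, B1) \<in> SF2 M" and s1: "(\<Sum>i\<in>UNIV. lor (A1 i)) = vector [1,0,0]"
    and R: "\<And>i. R *v lor (A0 i) = lor (A1 i)"
  shows "\<exists>g R'. invertible g \<and> (\<Sum>i\<in>UNIV. lor (g ** A1 i ** transpose g)) = vector [1,0,0] \<and>
     (\<forall>i. R' *v lor (A0 i) = lor (g ** A1 i ** transpose g)) \<and> R'$3$2 = 0 \<and> 0 \<le> R'$2$2"
proof -
  obtain c q where cq: "c * c + q * q = 1" "2 * q * c * R$2$2 + (c * c - q * q) * R$3$2 = 0"
      "0 \<le> (c * c - q * q) * R$2$2 - 2 * q * c * R$3$2"
    using rot_exists by blast
  define g where "g = mk2 c (- q) q c"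
  define L :: "real^3^3" where "L = vector [vector [1,0,0], vector [0, c * c - q * q, - (2 * q * c)], vector [0, 2 * q * c, c * c - q * q]]"
  have sym: "transpose (A1 i) = A1 i" for i using h by (auto simp: SF2_def psd2_def)
  have lg: "lor (g ** A1 i ** transpose g) = L *v lor (A1 i)" for i
    unfolding g_def L_def Lam_mv rot_lor[OF sym] using cq(1) by (simp add: algebra_simps)
  have "(\<Sum>i\<in>UNIV. lor (g ** A1 i ** transpose g)) = L *v (\<Sum>i\<in>UNIV. lor (A1 i))"
    by (simp add: lg mv_sum)
  also have "\<dots> = vector [1,0,0]" unfolding s1 L_def by (rule Lam_e1)
  finally have S: "(\<Sum>i\<in>UNIV. lor (g ** A1 i ** transpose g)) = vector [1,0,0]" .
  have R': "(L ** R) *v lor (A0 i) = lor (g ** A1 i ** transpose g)" for i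
    by (simp add: matrix_vector_mul_assoc[symmetric] R lg)
  have e32: "(L ** R)$3$2 = 0" using cq(2) by (simp add: L_def matrix_matrix_mult_def sum_3 algebra_simps)
  have e22: "0 \<le> (L ** R)$2$2" using cq(3) by (simp add: L_def matrix_matrix_mult_def sum_3 algebra_simps)
  have ig: "invertible g" unfolding g_def by (rule rot_inv[OF cq(1)])
  show ?thesis using ig S R' e32 e22 by (intro exI[of _ g] exI[of _ "L ** R"]) simp
qed

lemma refl_norm:
  fixes M :: "real^'q^'p"
  assumes h: "(A1, B1) \<in> SF2 M" and s1: "(\<Sum>i\<in>UNIV. lor (A1 i)) = vector [1,0,0]"
    and R: "\<And>i. R *v lor (A0 i) = lor (A1 i)" and r32: "R$3$2 = 0" and r22: "0 \<le> R$2$2"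
  shows "\<exists>g R'. invertible g \<and> (\<Sum>i\<in>UNIV. lor (g ** A1 i ** transpose g)) = vector [1,0,0] \<and>
     (\<forall>i. R' *v lor (A0 i) = lor (g ** A1 i ** transpose g)) \<and> R'$3$2 = 0 \<and> 0 \<le> R'$2$2 \<and> 0 \<le> R'$3$3"
proof (cases "0 \<le> R$3$3")
  case True
  have "lor (mat 1 ** A1 i ** transpose (mat 1)) = lor (A1 i)" for i by simp
  then show ?thesis using True invertible_I s1 R r32 r22
    by (intro exI[of _ "mat 1"] exI[of _ R]) simp
next
  case False
  define g where "g = mk2 1 0 0 (-1)"
  define L :: "real^3^3" where "L = vector [vector [1,0,0], vector [0,1,0], vector [0,0,-1]]"
  have sym: "transpose (A1 i) = A1 i" for i using h by (auto simp: SF2_def psd2_def)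
  have lg: "lor (g ** A1 i ** transpose g) = L *v lor (A1 i)" for i
    unfolding g_def L_def Ref_mv refl_lor[OF sym] by simp
  have "(\<Sum>i\<in>UNIV. lor (g ** A1 i ** transpose g)) = L *v (\<Sum>i\<in>UNIV. lor (A1 i))"
    by (simp add: lg mv_sum)
  also have "\<dots> = vector [1,0,0]" unfolding s1 L_def Ref_mv by simp
  finally have S: "(\<Sum>i\<in>UNIV. lor (g ** A1 i ** transpose g)) = vector [1,0,0]" .
  have R': "(L ** R) *v lor (A0 i) = lor (g ** A1 i ** transpose g)" for i
    by (simp add: matrix_vector_mul_assoc[symmetric] R lg)
  have e: "(L ** R)$3$2 = 0" "0 \<le> (L ** R)$2$2" "0 \<le> (L ** R)$3$3"
    using r32 r22 False by (simp_all add: L_def matrix_matrix_mult_def sum_3)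
  have ig: "invertible g" unfolding g_def by (rule refl_inv)
  show ?thesis using ig S R' e by (intro exI[of _ g] exI[of _ "L ** R"]) simp
qed



lemma act_step:
  assumes "x \<in> SF2 M" "invertible g"
  shows "GL2_act g x \<in> SF2 M" "(x, GL2_act g x) \<in> GL2_orbit_rel M"
  using act_SF[OF assms] assms by (auto simp: GL2_orbit_rel_def)

lemma act_pair: "GL2_act g (A, B) = ((\<lambda>i. g ** A i ** transpose g), (\<lambda>j. transpose (matrix_inv g) ** B j ** matrix_inv g))"
  by (simp add: GL2_act_def)

lemma orbit_trans: "(x, y) \<in> GL2_orbit_rel M \<Longrightarrow> (y, z) \<in> GL2_orbit_rel M \<Longrightarrow> (x, z) \<in> GL2_orbit_rel M"
  using equiv_orbit[of M] by (meson equiv_def transD)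

theorem proposition7p9:
  fixes M :: "real^'q^'p"
  assumes "\<forall>i j. 0 \<le> M $ i $ j"
    and "psd_rank M = 2"
    and "rank M = 3"
  shows "connected_space (SF2_mod_GL2 M)"
proof -
  have r: "rank M = 3" using assms(3) .
  show ?thesis unfolding SF2_mod_GL2_def
  proof (rule quotient_connected[OF equiv_orbit])
    fix x y assume x: "x \<in> SF2 M" and y: "y \<in> SF2 M"
    obtain A0 B0 where x0: "x = (A0, B0)" by fastforce
    obtain A1 B1 where y0: "y = (A1, B1)" by fastforce
    obtain g0 where g0: "invertible g0" "(\<Sum>i\<in>UNIV. lor (g0 ** A0 i ** transpose g0)) = vector [1,0,0]"
      using chol_norm[OF x[unfolded x0] r] by blast
    obtain g1 where g1: "invertible g1" "(\<Sum>i\<in>UNIV. lor (g1 ** A1 i ** transpose g1)) = vector [1,0,0]"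
      using chol_norm[OF y[unfolded y0] r] by blast
    define A0' where "A0' = (\<lambda>i. g0 ** A0 i ** transpose g0)"
    define B0' where "B0' = (\<lambda>j. transpose (matrix_inv g0) ** B0 j ** matrix_inv g0)"
    define A1' where "A1' = (\<lambda>i. g1 ** A1 i ** transpose g1)"
    define B1' where "B1' = (\<lambda>j. transpose (matrix_inv g1) ** B1 j ** matrix_inv g1)"
    have x': "(A0', B0') \<in> SF2 M" "(x, (A0', B0')) \<in> GL2_orbit_rel M"
      using act_step[OF x g0(1)] unfolding x0 act_pair A0'_def B0'_def by auto
    have y': "(A1', B1') \<in> SF2 M" "(y, (A1', B1')) \<in> GL2_orbit_rel M"
      using act_step[OF y g1(1)] unfolding y0 act_pair A1'_def B1'_def by auto
    obtain R where R: "\<And>i. R *v lor (A0' i) = lor (A1' i)"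
      using R_exists[OF x'(1) y'(1) r] by blast
    have s1: "(\<Sum>i\<in>UNIV. lor (A1' i)) = vector [1,0,0]" using g1(2) by (simp add: A1'_def)
    have s0: "(\<Sum>i\<in>UNIV. lor (A0' i)) = vector [1,0,0]" using g0(2) by (simp add: A0'_def)
    obtain g2 R2 where g2: "invertible g2" "(\<Sum>i\<in>UNIV. lor (g2 ** A1' i ** transpose g2)) = vector [1,0,0]"
        "\<forall>i. R2 *v lor (A0' i) = lor (g2 ** A1' i ** transpose g2)" "R2$3$2 = 0" "0 \<le> R2$2$2"
      using rot_norm[OF y'(1) s1 R] by blast
    define A1'' where "A1'' = (\<lambda>i. g2 ** A1' i ** transpose g2)"
    define B1'' where "B1'' = (\<lambda>j. transpose (matrix_inv g2) ** B1' j ** matrix_inv g2)"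
    have y'': "(A1'', B1'') \<in> SF2 M" "((A1', B1'), (A1'', B1'')) \<in> GL2_orbit_rel M"
      using act_step[OF y'(1) g2(1)] unfolding act_pair A1''_def B1''_def by auto
    have s2: "(\<Sum>i\<in>UNIV. lor (A1'' i)) = vector [1,0,0]" using g2(2) by (simp add: A1''_def)
    have R2': "\<And>i. R2 *v lor (A0' i) = lor (A1'' i)" using g2(3) by (simp add: A1''_def)
    obtain g3 R3 where g3: "invertible g3" "(\<Sum>i\<in>UNIV. lor (g3 ** A1'' i ** transpose g3)) = vector [1,0,0]"
        "\<forall>i. R3 *v lor (A0' i) = lor (g3 ** A1'' i ** transpose g3)" "R3$3$2 = 0" "0 \<le> R3$2$2" "0 \<le> R3$3$3"
      using refl_norm[OF y''(1) s2 R2' g2(4) g2(5)] by blast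
    define A1''' where "A1''' = (\<lambda>i. g3 ** A1'' i ** transpose g3)"
    define B1''' where "B1''' = (\<lambda>j. transpose (matrix_inv g3) ** B1'' j ** matrix_inv g3)"
    have y''': "(A1''', B1''') \<in> SF2 M" "((A1'', B1''), (A1''', B1''')) \<in> GL2_orbit_rel M"
      using act_step[OF y''(1) g3(1)] unfolding act_pair A1'''_def B1'''_def by auto
    have s3: "(\<Sum>i\<in>UNIV. lor (A1''' i)) = vector [1,0,0]" using g3(2) by (simp add: A1'''_def)
    have R3': "\<And>i. R3 *v lor (A0' i) = lor (A1''' i)" using g3(3) by (simp add: A1'''_def)
    obtain T where T: "connected T" "T \<subseteq> SF2 M" "(A0', B0') \<in> T" "(A1''', B1''') \<in> T"
      using path_exists[OF r x'(1) y'''(1) s0 s3 R3' g3(4) g3(5) g3(6)] by blast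
    have yy: "(y, (A1''', B1''')) \<in> GL2_orbit_rel M"
      using orbit_trans[OF orbit_trans[OF y'(2) y''(2)] y'''(2)] .
    show "\<exists>T. connected T \<and> T \<subseteq> SF2 M \<and> (\<exists>x'\<in>T. (x, x') \<in> GL2_orbit_rel M) \<and>
               (\<exists>y'\<in>T. (y, y') \<in> GL2_orbit_rel M)"
      using T x'(2) yy by blast
  qed
qed



end
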